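(* Let $W$ be a suitable basis of $A$ at $\{\beta_1,\ldots,\beta_I\}$. Let $e,\tilde e\in C[x]$ and $M,\tilde M\in C[x]^{r\times r}$ be such that $SW=\frac1eMW$ and $\frac1{\tilde e}\tilde M=(\frac1eM)^{-1}$. Let $p_i\in C[x]$ be the minimal polynomial of $\beta_i$ over $C$. Let $q\in C[x]$, $a\in C[x]^r$ and $\ell\in\mathbb Z$. (i) If $\gcd(q,\sigma^j(p_i))=1$ for all $i\in\{1,\dots,I\}$ and $j\in\mathbb Z$, then there exist $g\in A$ and $c\in C[x]^r$ with $\frac{aW}{\sigma^\ell(q)}=\Delta g+\frac{cW}{qe\tilde e}$. (ii) If $q=p_i^m$ for some $i\in\{1,\dots,I\}$ and $m>0$, then there also exist $g\in A$ and $c\in C[x]^r$ with $\frac{aW}{\sigma^\ell(q)}=\Delta g+\frac{cW}{qe\tilde e}$.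
   Context: Let $C$ be a field of characteristic zero and $\bar C$ its algebraic closure; $\sigma(f)(x)=f(x+1)$ (extended entrywise to vectors/matrices), $C(x)[S]$ the Ore algebra with $Sf=\sigma(f)S$, $\Delta=S-1$. Fix $L=\sum_{i=0}^r\ell_iS^i\in C[x][S]$ with $\ell_0\ell_r\ne0$ and $A=C(x)[S]/C(x)[S]L$. For a basis $W=(\omega_1,\dots,\omega_r)$, $a\in C[x]^r$, $u\in C[x]$: $\frac{aW}{u}=\frac1u\sum a_i\omega_i$, $SW=(S\omega_i)_i$. For $\alpha\in\bar C$, operators $P=\sum p_iS^i$ act on $b:\alpha+\mathbb Z\to\bar C((q))$ by $(P\cdot b)(z)=\sum p_i(z+q)b(z+i)$; $\operatorname{Sol}_\alpha(L)=\{b:L\cdot b=0\}$; $\operatorname{val}_\alpha(f)=\min_{b\in\operatorname{Sol}_\alpha(L)}(\nu_q((f\cdot b)(\alpha))-\liminf_n\nu_q(b(\alpha-n)))$; $f$ integral at $\alpha$ iff $\operatorname{val}_\alpha(f)\ge0$; a local integral basis at $\alpha$ is a basis of the $C(x)_\alpha$-module of integral elements ($C(x)_\alpha=\{p/q:q(\alpha)\ne0\}$), and at a set if at each point. On $\alpha+\mathbb Z$, $\beta<\gamma$ means $\beta-\gamma$ is a negative integer. Suitable bases: let $\alpha_1+\mathbb Z,\dots,\alpha_I+\mathbb Z$ be the distinct orbits containing a root of $\ell_0\ell_r$; in orbit $i$ let $\alpha_{i,1}<\dots<\alpha_{i,J_i}$ be these roots, and choose $\beta_i\in\alpha_i+\mathbb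 Z$ with $\alpha_{i,J_i}\le\beta_i$, such that if $\alpha_{i,J_i},\alpha_{i',J_{i'}}$ are $C$-conjugate then $\beta_i-\alpha_{i,J_i}=\beta_{i'}-\alpha_{i',J_{i'}}$. Let $Z=\bigcup_i\{\gamma\in\alpha_i+\mathbb Z\mid\alpha_{i,1}<\gamma\le\beta_i\}$. A $C(x)$-basis $W$ of $A$ is suitable at $\{\beta_1,\dots,\beta_I\}$ if it is a local integral basis at $Z$ and generates the same $C(x)_\alpha$-module as $\{1,S,\dots,S^{r-1}\}$ for every $\alpha\in\bar C\setminus Z$. *)

theory Defs
  imports "HOL-Algebra.Algebraic_Closure_Type"
          "HOL-Computational_Algebra.Formal_Laurent_Series"
          "HOL-Computational_Algebra.Polynomial_FPS"
          "HOL-Library.Liminf_Limsup"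
          "HOL-Library.Extended_Real"
begin

(* C       : a type 'c :: field_char_0 (with the trivial field gcd instance, so that gcd on C[x] exists)
   C[x]    : 'c poly
   C(x)    : 'c poly fract
   \<bar>C    : 'c alg_closure, with embedding to_ac :: 'c \<Rightarrow> 'c alg_closure
   L = \<Sum>_{i=0}^r l i S^i
   A = C(x)[S]/C(x)[S]L is modelled by coordinates w.r.t. the C(x)-basis 1,S,...,S^(r-1):
       an element is a function nat \<Rightarrow> C(x); only the coordinates k < r matter.
   A family W = (\<omega>_1,...,\<omega>_r) is a function nat \<Rightarrow> element, \<omega>_(i+1) = W i (i < r). *)

type_synonym 'c elt = "nat \<Rightarrow> 'c poly fract"

definition polyf :: "'c::idom poly \<Rightarrow> 'c poly fract" where
  "polyf p = Fract p 1"

definition shiftp :: "int \<Rightarrow> 'c::comm_ring_1 poly \<Rightarrow> 'c poly" where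
  "shiftp j p = pcompose p [:of_int j, 1:]"

definition frep :: "'a::idom fract \<Rightarrow> 'a \<times> 'a" where
  "frep f = (SOME nd. snd nd \<noteq> 0 \<and> f = Fract (fst nd) (snd nd))"

definition shiftf :: "int \<Rightarrow> 'c::field poly fract \<Rightarrow> 'c poly fract" where
  "shiftf j f = Fract (shiftp j (fst (frep f))) (shiftp j (snd (frep f)))"

definition eqA :: "nat \<Rightarrow> 'c::field elt \<Rightarrow> 'c elt \<Rightarrow> bool" where
  "eqA r f g \<longleftrightarrow> (\<forall>k<r. f k = g k)"

(* left multiplication by S in A:  S (\<Sum> f_i S^i) = \<Sum> \<sigma>(f_i) S^(i+1),  S^r = -\<Sum>_{i<r} (l_i/l_r) S^i *)
definition Sact :: "(nat \<Rightarrow> 'c::field poly) \<Rightarrow> nat \<Rightarrow> 'c elt \<Rightarrow> 'c elt" where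
  "Sact l r f = (\<lambda>k. (if k = 0 then 0 else shiftf 1 (f (k - 1)))
                     - shiftf 1 (f (r - 1)) * polyf (l k) / polyf (l r))"

definition Delta :: "(nat \<Rightarrow> 'c::field poly) \<Rightarrow> nat \<Rightarrow> 'c elt \<Rightarrow> 'c elt" where
  "Delta l r g = (\<lambda>k. Sact l r g k - g k)"

definition addA :: "'c::field elt \<Rightarrow> 'c elt \<Rightarrow> 'c elt" where
  "addA f g = (\<lambda>k. f k + g k)"

definition comb :: "nat \<Rightarrow> (nat \<Rightarrow> 'c::field poly fract) \<Rightarrow> (nat \<Rightarrow> 'c elt) \<Rightarrow> 'c elt" where
  "comb r c W = (\<lambda>k. \<Sum>i<r. c i * W i k)"

definition fracA :: "nat \<Rightarrow> 'c::field poly \<Rightarrow> (nat \<Rightarrow> 'c poly) \<Rightarrow> (nat \<Rightarrow> 'c elt) \<Rightarrow> 'c elt" where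
  "fracA r u a W = (\<lambda>k. (\<Sum>i<r. polyf (a i) * W i k) / polyf u)"

definition is_basisA :: "nat \<Rightarrow> (nat \<Rightarrow> 'c::field elt) \<Rightarrow> bool" where
  "is_basisA r W \<longleftrightarrow>
     (\<forall>c. eqA r (comb r c W) (\<lambda>_. 0) \<longrightarrow> (\<forall>i<r. c i = 0)) \<and>
     (\<forall>f. \<exists>c. eqA r f (comb r c W))"

(* p(z+q) \<in> \<bar>C((q)) for p \<in> C[x], z \<in> \<bar>C *)
definition poly_at_shift :: "'c::field poly \<Rightarrow> 'c alg_closure \<Rightarrow> 'c alg_closure fls" where
  "poly_at_shift p z = fps_to_fls (fps_of_poly (pcompose (map_poly to_ac p) [:z, 1:]))"

definition rat_at_shift :: "'c::field poly fract \<Rightarrow> 'c alg_closure \<Rightarrow> 'c alg_closure fls" where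
  "rat_at_shift f z = poly_at_shift (fst (frep f)) z / poly_at_shift (snd (frep f)) z"

definition nu_q :: "'a::zero fls \<Rightarrow> ereal" where
  "nu_q f = (if f = 0 then \<infinity> else ereal (of_int (fls_subdegree f)))"

(* Sol_\<alpha>(L): b n stands for b(\<alpha>+n) *)
definition SolA :: "(nat \<Rightarrow> 'c::field poly) \<Rightarrow> nat \<Rightarrow> 'c alg_closure
                      \<Rightarrow> (int \<Rightarrow> 'c alg_closure fls) set" where
  "SolA l r \<alpha> = {b. \<forall>n::int. (\<Sum>i\<le>r. poly_at_shift (l i) (\<alpha> + of_int n) * b (n + int i)) = 0}"

definition act_at :: "nat \<Rightarrow> 'c::field elt \<Rightarrow> 'c alg_closure \<Rightarrow> (int \<Rightarrow> 'c alg_closure fls)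
                      \<Rightarrow> 'c alg_closure fls" where
  "act_at r f \<alpha> b = (\<Sum>i<r. rat_at_shift (f i) \<alpha> * b (int i))"

definition valA :: "(nat \<Rightarrow> 'c::field poly) \<Rightarrow> nat \<Rightarrow> 'c alg_closure \<Rightarrow> 'c elt \<Rightarrow> ereal" where
  "valA l r \<alpha> f = (INF b \<in> SolA l r \<alpha> - {\<lambda>_. 0}.
       nu_q (act_at r f \<alpha> b) - liminf (\<lambda>n::nat. nu_q (b (- int n))))"

definition integral_at :: "(nat \<Rightarrow> 'c::field poly) \<Rightarrow> nat \<Rightarrow> 'c alg_closure \<Rightarrow> 'c elt \<Rightarrow> bool" where
  "integral_at l r \<alpha> f \<longleftrightarrow> valA l r \<alpha> f \<ge> 0"

definition loc_ring :: "'c::field alg_closure \<Rightarrow> 'c poly fract set" where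
  "loc_ring \<alpha> = {f. \<exists>n d. poly (map_poly to_ac d) \<alpha> \<noteq> 0 \<and> f = Fract n d}"

definition local_integral_basis ::
    "(nat \<Rightarrow> 'c::field poly) \<Rightarrow> nat \<Rightarrow> 'c alg_closure \<Rightarrow> (nat \<Rightarrow> 'c elt) \<Rightarrow> bool" where
  "local_integral_basis l r \<alpha> W \<longleftrightarrow>
     (\<forall>i<r. integral_at l r \<alpha> (W i)) \<and>
     (\<forall>f. integral_at l r \<alpha> f \<longrightarrow> (\<exists>c. (\<forall>i<r. c i \<in> loc_ring \<alpha>) \<and> eqA r f (comb r c W))) \<and>
     (\<forall>c. (\<forall>i<r. c i \<in> loc_ring \<alpha>) \<longrightarrow> eqA r (comb r c W) (\<lambda>_. 0) \<longrightarrow> (\<forall>i<r. c i = 0))"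

definition same_module_as_std :: "nat \<Rightarrow> 'c::field alg_closure \<Rightarrow> (nat \<Rightarrow> 'c elt) \<Rightarrow> bool" where
  "same_module_as_std r \<alpha> W \<longleftrightarrow>
     (\<forall>f. (\<exists>c. (\<forall>i<r. c i \<in> loc_ring \<alpha>) \<and> eqA r f (comb r c W))
          \<longleftrightarrow> (\<exists>c. (\<forall>i<r. c i \<in> loc_ring \<alpha>) \<and> (\<forall>k<r. f k = c k)))"

definition same_orbit :: "'a::ring_1 \<Rightarrow> 'a \<Rightarrow> bool" where
  "same_orbit z w \<longleftrightarrow> (\<exists>k::int. z - w = of_int k)"

definition orb_lt :: "'a::ring_1 \<Rightarrow> 'a \<Rightarrow> bool" where
  "orb_lt z w \<longleftrightarrow> (\<exists>n::nat. n > 0 \<and> z - w = - of_nat n)"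

definition orb_le :: "'a::ring_1 \<Rightarrow> 'a \<Rightarrow> bool" where
  "orb_le z w \<longleftrightarrow> z = w \<or> orb_lt z w"

definition rootsL :: "(nat \<Rightarrow> 'c::field poly) \<Rightarrow> nat \<Rightarrow> 'c alg_closure set" where
  "rootsL l r = {z. poly (map_poly to_ac (l 0 * l r)) z = 0}"

definition orbit_min :: "'a::ring_1 set \<Rightarrow> 'a \<Rightarrow> 'a" where
  "orbit_min R b = (THE \<rho>. \<rho> \<in> R \<and> same_orbit \<rho> b \<and> (\<forall>\<rho>'\<in>R. same_orbit \<rho>' b \<longrightarrow> orb_le \<rho> \<rho>'))"

definition orbit_max :: "'a::ring_1 set \<Rightarrow> 'a \<Rightarrow> 'a" where
  "orbit_max R b = (THE \<rho>. \<rho> \<in> R \<and> same_orbit \<rho> b \<and> (\<forall>\<rho>'\<in>R. same_orbit \<rho>' b \<longrightarrow> orb_le \<rho>' \<rho>))"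

definition is_min_poly :: "'c::field alg_closure \<Rightarrow> 'c poly \<Rightarrow> bool" where
  "is_min_poly z p \<longleftrightarrow> lead_coeff p = 1 \<and> poly (map_poly to_ac p) z = 0 \<and>
      (\<forall>q. q \<noteq> 0 \<and> poly (map_poly to_ac q) z = 0 \<longrightarrow> degree p \<le> degree q)"

definition C_conjugate :: "'c::field alg_closure \<Rightarrow> 'c alg_closure \<Rightarrow> bool" where
  "C_conjugate z w \<longleftrightarrow> (\<exists>p. is_min_poly z p \<and> is_min_poly w p)"

(* \<beta>_1,...,\<beta>_I (here \<beta> 0, ..., \<beta> (I-1)) chosen as required *)
definition admissible_betas ::
    "(nat \<Rightarrow> 'c::field poly) \<Rightarrow> nat \<Rightarrow> nat \<Rightarrow> (nat \<Rightarrow> 'c alg_closure) \<Rightarrow> bool" where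
  "admissible_betas l r I \<beta> \<longleftrightarrow>
     (let R = rootsL l r in
       (\<forall>i<I. \<exists>\<rho>\<in>R. same_orbit \<rho> (\<beta> i)) \<and>
       (\<forall>\<rho>\<in>R. \<exists>i<I. same_orbit \<rho> (\<beta> i)) \<and>
       (\<forall>i<I. \<forall>j<I. i \<noteq> j \<longrightarrow> \<not> same_orbit (\<beta> i) (\<beta> j)) \<and>
       (\<forall>i<I. orb_le (orbit_max R (\<beta> i)) (\<beta> i)) \<and>
       (\<forall>i<I. \<forall>i'<I. C_conjugate (orbit_max R (\<beta> i)) (orbit_max R (\<beta> i')) \<longrightarrow>
            \<beta> i - orbit_max R (\<beta> i) = \<beta> i' - orbit_max R (\<beta> i')))"

definition Zset :: "(nat \<Rightarrow> 'c::field poly) \<Rightarrow> nat \<Rightarrow> nat \<Rightarrow> (nat \<Rightarrow> 'c alg_closure)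
                     \<Rightarrow> 'c alg_closure set" where
  "Zset l r I \<beta> = {\<gamma>. \<exists>i<I. same_orbit \<gamma> (\<beta> i) \<and>
       orb_lt (orbit_min (rootsL l r) (\<beta> i)) \<gamma> \<and> orb_le \<gamma> (\<beta> i)}"

definition suitable_basis ::
    "(nat \<Rightarrow> 'c::field poly) \<Rightarrow> nat \<Rightarrow> nat \<Rightarrow> (nat \<Rightarrow> 'c alg_closure) \<Rightarrow> (nat \<Rightarrow> 'c elt) \<Rightarrow> bool" where
  "suitable_basis l r I \<beta> W \<longleftrightarrow>
     is_basisA r W \<and>
     (\<forall>\<alpha>\<in>Zset l r I \<beta>. local_integral_basis l r \<alpha> W) \<and>
     (\<forall>\<alpha>. \<alpha> \<notin> Zset l r I \<beta> \<longrightarrow> same_module_as_std r \<alpha> W)"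

end

theory Submission
  imports Defs "HOL-Computational_Algebra.Normalized_Fraction"
begin

abbreviation ac :: "'c::field poly \<Rightarrow> 'c alg_closure poly" where "ac p \<equiv> map_poly to_ac p"

lemma coeff_ac: "coeff (ac p) n = to_ac (coeff p n)"
  by (simp add: coeff_map_poly)

lemma ac_add: "ac (p + q) = ac p + ac q"
  by (rule poly_eqI) (simp add: coeff_ac)
lemma ac_minus: "ac (- p) = - ac p"
  by (rule poly_eqI) (simp add: coeff_ac)
lemma ac_diff: "ac (p - q) = ac p - ac q"
  by (rule poly_eqI) (simp add: coeff_ac)
lemma ac_mult: "ac (p * q) = ac p * ac q"
proof (rule poly_eqI)
  fix n show "coeff (ac (p * q)) n = coeff (ac p * ac q) n"
    unfolding coeff_ac coeff_mult to_ac_sum to_ac_mult ..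
qed
lemma ac_pCons: "ac (pCons a p) = pCons (to_ac a) (ac p)"
  by (simp add: map_poly_pCons)
lemma ac_const: "ac [:a:] = [:to_ac a:]"
  by (simp add: map_poly_pCons)
lemma ac_1: "ac 1 = 1" by simp
lemma ac_eq_0_iff: "ac p = 0 \<longleftrightarrow> p = 0"
  by (simp add: map_poly_eq_0_iff)
lemma ac_power: "ac (p ^ n) = ac p ^ n"
  by (induction n) (simp_all add: ac_mult)
lemma ac_prod: "ac (prod f A) = prod (\<lambda>i. ac (f i)) A"
  by (induction A rule: infinite_finite_induct) (simp_all add: ac_mult)
lemma ac_pcompose: "ac (pcompose p q) = pcompose (ac p) (ac q)"
  by (induction p) (simp_all add: pcompose_pCons ac_pCons ac_add ac_mult ac_const)
lemma degree_ac: "degree (ac p) = degree p"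
  by (simp add: degree_map_poly)

lemma poly_ac_shiftp: "poly (ac (shiftp j p)) z = poly (ac p) (z + of_int j)"
  by (simp add: shiftp_def ac_pcompose poly_pcompose ac_pCons algebra_simps)

lemma shiftp_add: "shiftp j (p + q) = shiftp j p + shiftp j q"
  by (simp add: shiftp_def pcompose_add)
lemma shiftp_mult: "shiftp j (p * q) = shiftp j p * shiftp j q"
  by (simp add: shiftp_def pcompose_mult)
lemma shiftp_diff: "shiftp j (p - q) = shiftp j p - shiftp j q"
  by (simp add: shiftp_def pcompose_diff)
lemma shiftp_minus: "shiftp j (- p) = - shiftp j p"
  by (simp add: shiftp_def pcompose_uminus)
lemma shiftp_0[simp]: "shiftp j 0 = 0" by (simp add: shiftp_def)
lemma shiftp_1[simp]: "shiftp j 1 = 1" by (simp add: shiftp_def pcompose_1)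
lemma shiftp_power: "shiftp j (p ^ n) = shiftp j p ^ n"
  by (induction n) (simp_all add: shiftp_mult)
lemma shiftp_prod: "shiftp j (prod f A) = prod (\<lambda>i. shiftp j (f i)) A"
  by (simp add: shiftp_def pcompose_prod)
lemma shiftp_shiftp: "shiftp j (shiftp k p) = shiftp (j + k) (p :: 'a::comm_ring_1 poly)"
  by (simp add: shiftp_def pcompose_assoc[symmetric] pcompose_pCons algebra_simps)
lemma shiftp_zero_shift: "shiftp 0 p = p"
  by (simp add: shiftp_def)
lemma shiftp_eq_0_iff: "shiftp j (p :: 'a::idom poly) = 0 \<longleftrightarrow> p = 0"
  by (simp add: shiftp_def pcompose_eq_0_iff)
lemma degree_shiftp: "degree (shiftp j (p :: 'a::idom poly)) = degree p"
  by (simp add: shiftp_def degree_pcompose)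

lemma polyf_add: "polyf (p + q) = polyf p + polyf q" by (simp add: polyf_def)
lemma polyf_mult: "polyf (p * q) = polyf p * polyf q" by (simp add: polyf_def)
lemma polyf_diff: "polyf (p - q) = polyf p - polyf q" by (simp add: polyf_def)
lemma polyf_minus: "polyf (- p) = - polyf p" by (simp add: polyf_def)
lemma polyf_0[simp]: "polyf 0 = 0" by (simp add: polyf_def Zero_fract_def)
lemma polyf_1[simp]: "polyf 1 = 1" by (simp add: polyf_def One_fract_def)
lemma polyf_eq_iff: "polyf p = polyf q \<longleftrightarrow> p = q" by (simp add: polyf_def eq_fract)
lemma polyf_eq_0_iff: "polyf p = 0 \<longleftrightarrow> p = 0" by (simp add: polyf_def Zero_fract_def eq_fract)
lemma polyf_sum: "polyf (sum f A) = sum (\<lambda>i. polyf (f i)) A"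
  by (induction A rule: infinite_finite_induct) (simp_all add: polyf_add)
lemma polyf_prod: "polyf (prod f A) = prod (\<lambda>i. polyf (f i)) A"
  by (induction A rule: infinite_finite_induct) (simp_all add: polyf_mult)
lemma polyf_power: "polyf (p ^ n) = polyf p ^ n"
  by (induction n) (simp_all add: polyf_mult)
lemma polyf_div: "d \<noteq> 0 \<Longrightarrow> polyf n / polyf d = Fract n d"
  by (simp add: polyf_def)
lemma Fract_polyf: "d \<noteq> 0 \<Longrightarrow> Fract n d = polyf n / polyf d"
  by (simp add: polyf_def)

lemma frep: "snd (frep f) \<noteq> 0 \<and> f = Fract (fst (frep f)) (snd (frep f))"
  unfolding frep_def
proof (rule someI_ex)
  obtain a b where "f = Fract a b" "b \<noteq> 0" by (cases f) auto
  then show "\<exists>nd. snd nd \<noteq> 0 \<and> f = Fract (fst nd) (snd nd)" by (intro exI[of _ "(a,b)"]) auto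
qed

lemma shiftf_Fract:
  fixes n d :: "'c::field poly"
  assumes "d \<noteq> 0" shows "shiftf j (Fract n d) = Fract (shiftp j n) (shiftp j d)"
proof -
  obtain n' d' where fr: "frep (Fract n d) = (n', d')" by (cases "frep (Fract n d)")
  with frep[of "Fract n d"] have d': "d' \<noteq> 0" and e: "Fract n d = Fract n' d'" by auto
  hence "n * d' = n' * d" using assms by (simp add: eq_fract)
  hence "shiftp j n * shiftp j d' = shiftp j n' * shiftp j d" by (metis shiftp_mult)
  thus ?thesis using assms d' fr by (simp add: shiftf_def eq_fract shiftp_eq_0_iff)
qed

lemma shiftf_polyf: "shiftf j (polyf p) = polyf (shiftp j p)"
  by (simp add: polyf_def shiftf_Fract)

lemma shiftf_add: "shiftf j (x + y) = shiftf j x + shiftf j (y :: 'c::field poly fract)"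
  by (cases x, cases y) (simp add: shiftf_Fract shiftp_add shiftp_mult shiftp_eq_0_iff)
lemma shiftf_mult: "shiftf j (x * y) = shiftf j x * shiftf j (y :: 'c::field poly fract)"
  by (cases x, cases y) (simp add: shiftf_Fract shiftp_add shiftp_mult shiftp_eq_0_iff)
lemma shiftf_minus: "shiftf j (- x) = - shiftf j (x :: 'c::field poly fract)"
  by (cases x) (simp add: shiftf_Fract shiftp_minus)
lemma shiftf_diff: "shiftf j (x - y) = shiftf j x - shiftf j (y :: 'c::field poly fract)"
  by (simp only: diff_conv_add_uminus shiftf_add shiftf_minus)
lemma shiftf_0[simp]: "shiftf j (0 :: 'c::field poly fract) = 0"
  by (metis polyf_0 shiftf_polyf shiftp_0)
lemma shiftf_1[simp]: "shiftf j (1 :: 'c::field poly fract) = 1"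
  by (metis polyf_1 shiftf_polyf shiftp_1)
lemma shiftf_inverse: "shiftf j (inverse x) = inverse (shiftf j (x :: 'c::field poly fract))"
proof (cases x)
  case (Fract a b)
  show ?thesis
  proof (cases "a = 0")
    case True
    have x0: "x = 0" using Fract True by (metis fract_collapse(1))
    show ?thesis unfolding x0 inverse_zero shiftf_0 ..
  next
    case False
    have "shiftf j (inverse x) = Fract (shiftp j b) (shiftp j a)"
      using Fract False by (simp only: inverse_fract shiftf_Fract not_False_eq_True)
    also have "\<dots> = inverse (shiftf j x)"
      using Fract by (simp only: inverse_fract shiftf_Fract not_False_eq_True)
    finally show ?thesis .
  qed
qed
lemma shiftf_divide: "shiftf j (x / y) = shiftf j x / shiftf j (y :: 'c::field poly fract)"
  by (simp only: divide_inverse shiftf_mult shiftf_inverse)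
lemma shiftf_sum: "shiftf j (sum f A) = sum (\<lambda>i. shiftf j (f i :: 'c::field poly fract)) A"
  by (induction A rule: infinite_finite_induct) (simp_all add: shiftf_add)
lemma shiftf_shiftf: "shiftf j (shiftf k x) = shiftf (j + k) (x :: 'c::field poly fract)"
  by (cases x) (simp add: shiftf_Fract shiftp_shiftp shiftp_eq_0_iff)
lemma shiftf_zero_shift: "shiftf 0 x = (x :: 'c::field poly fract)"
  by (cases x) (simp add: shiftf_Fract shiftp_zero_shift)
lemma shiftf_eq_iff: "shiftf j x = shiftf j y \<longleftrightarrow> x = (y :: 'c::field poly fract)"
proof
  assume "shiftf j x = shiftf j y"
  hence "shiftf (-j) (shiftf j x) = shiftf (-j) (shiftf j y)" by simp
  thus "x = y" by (simp add: shiftf_shiftf shiftf_zero_shift)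
qed simp

section \<open>local rings\<close>

lemma poly_ac_nz: "poly (ac d) z \<noteq> 0 \<Longrightarrow> d \<noteq> 0"
  by auto

lemma loc_ringI: "poly (ac d) z \<noteq> 0 \<Longrightarrow> Fract n d \<in> loc_ring z"
  by (auto simp: loc_ring_def)

lemma loc_ringE:
  assumes "f \<in> loc_ring z"
  obtains n d where "poly (ac d) z \<noteq> 0" "d \<noteq> 0" "f = Fract n d"
proof -
  from assms obtain n d where "poly (ac d) z \<noteq> 0" "f = Fract n d" by (auto simp: loc_ring_def)
  moreover from this have "d \<noteq> 0" by auto
  ultimately show thesis using that by blast
qed

lemma loc_polyf: "polyf p \<in> loc_ring z"
  unfolding polyf_def by (rule loc_ringI) simp

lemma loc_0: "0 \<in> loc_ring z" using loc_polyf[of 0] by simp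
lemma loc_1: "1 \<in> loc_ring z" using loc_polyf[of 1] by simp

lemma loc_add: "f \<in> loc_ring z \<Longrightarrow> g \<in> loc_ring z \<Longrightarrow> f + g \<in> loc_ring z"
  by (elim loc_ringE) (auto intro!: loc_ringI simp: ac_mult)
lemma loc_mult: "f \<in> loc_ring z \<Longrightarrow> g \<in> loc_ring z \<Longrightarrow> f * g \<in> loc_ring z"
  by (elim loc_ringE) (auto intro!: loc_ringI simp: ac_mult)
lemma loc_minus: "f \<in> loc_ring z \<Longrightarrow> - f \<in> loc_ring z"
  by (elim loc_ringE) (auto intro!: loc_ringI simp: ac_mult)
lemma loc_diff: "f \<in> loc_ring z \<Longrightarrow> g \<in> loc_ring z \<Longrightarrow> f - g \<in> loc_ring z"
  by (simp only: diff_conv_add_uminus loc_add loc_minus)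
lemma loc_sum: "(\<And>i. i \<in> A \<Longrightarrow> f i \<in> loc_ring z) \<Longrightarrow> sum f A \<in> loc_ring z"
  by (induction A rule: infinite_finite_induct) (auto intro: loc_add loc_0)
lemma loc_div: "f \<in> loc_ring z \<Longrightarrow> poly (ac d) z \<noteq> 0 \<Longrightarrow> f / polyf d \<in> loc_ring z"
  by (elim loc_ringE) (auto intro!: loc_ringI simp: ac_mult polyf_def)

lemma loc_shift:
  assumes "f \<in> loc_ring (z + of_int j)" shows "shiftf j f \<in> loc_ring z"
  using assms by (elim loc_ringE) (auto intro!: loc_ringI simp: shiftf_Fract poly_ac_shiftp)

section \<open>coprimality\<close>

lemma common_root_ac:
  fixes p q :: "'c::{field_char_0,field_gcd} poly"
  assumes "poly (ac p) z = 0" "poly (ac q) z = 0"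
  shows "\<not> coprime p q"
proof
  assume "coprime p q"
  hence "gcd p q = 1" by (metis coprime_iff_gcd_eq_1)
  hence "fst (bezout_coefficients p q) * p + snd (bezout_coefficients p q) * q = 1"
    by (simp add: bezout_coefficients_fst_snd)
  hence "poly (ac (fst (bezout_coefficients p q) * p + snd (bezout_coefficients p q) * q)) z = 1"
    by simp
  thus False using assms by (simp add: ac_add ac_mult)
qed

lemma coprime_no_common_root:
  fixes p q :: "'c::{field_char_0,field_gcd} poly"
  assumes "q \<noteq> 0" "\<And>z. poly (ac q) z = 0 \<Longrightarrow> poly (ac p) z \<noteq> 0"
  shows "coprime p q"
proof -
  define g where "g = gcd p q"
  have g0: "g \<noteq> 0" using assms(1) by (simp add: g_def)
  show ?thesis
  proof (cases "degree g = 0")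
    case True
    hence "is_unit g" using g0 by (simp add: is_unit_iff_degree)
    thus ?thesis unfolding g_def by (metis is_unit_gcd)
  next
    case False
    hence "degree (ac g) > 0" by (simp add: degree_ac)
    then obtain z where z: "poly (ac g) z = 0" using alg_closed_imp_poly_has_root by blast
    obtain a where a: "q = g * a" unfolding g_def by (meson dvd_def gcd_dvd2)
    obtain b where b: "p = g * b" unfolding g_def by (meson dvd_def gcd_dvd1)
    have "poly (ac q) z = 0" using z a by (simp add: ac_mult)
    moreover have "poly (ac p) z = 0" using z b by (simp add: ac_mult)
    ultimately show ?thesis using assms(2) by blast
  qed
qed

lemma den_uniform:
  fixes f :: "'c::{field_char_0,field_gcd} poly fract"
  obtains n d where "d \<noteq> 0" "f = Fract n d" "\<And>z. f \<in> loc_ring z \<Longrightarrow> poly (ac d) z \<noteq> 0"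
proof -
  obtain n d where nd: "quot_of_fract f = (n, d)" by (cases "quot_of_fract f")
  have norm: "(n, d) \<in> normalized_fracts" using quot_of_fract_in_normalized_fracts[of f] nd by simp
  hence cop: "coprime n d" and d0: "d \<noteq> 0" by (auto simp: normalized_fracts_def)
  have f: "f = Fract n d" using quot_to_fract_quot_of_fract[of f] nd by (simp add: quot_to_fract_def)
  show ?thesis
  proof (rule that[OF d0 f])
    fix z assume "f \<in> loc_ring z"
    then obtain n' d' where d': "poly (ac d') z \<noteq> 0" "d' \<noteq> 0" "f = Fract n' d'"
      by (elim loc_ringE)
    hence "n * d' = n' * d" using f d0 by (simp add: eq_fract)
    hence "d dvd n * d'" by simp
    hence "d dvd d'" using cop by (simp add: coprime_dvd_mult_right_iff coprime_commute)
    then obtain t where "d' = d * t" by (auto simp: dvd_def)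
    thus "poly (ac d) z \<noteq> 0" using d' by (auto simp: ac_mult)
  qed
qed

lemma coprime_prod_left:
  fixes Q :: "'a::semiring_gcd"
  shows "(\<And>i. i \<in> A \<Longrightarrow> coprime (f i) Q) \<Longrightarrow> coprime (prod f A) Q"
  by (induction A rule: infinite_finite_induct) auto

lemma uniform_denominator:
  fixes F :: "'c::{field_char_0,field_gcd} poly fract set" and Q :: "'c poly"
  assumes "finite F" "Q \<noteq> 0" "\<And>f z. f \<in> F \<Longrightarrow> poly (ac Q) z = 0 \<Longrightarrow> f \<in> loc_ring z"
  shows "\<exists>D. coprime D Q \<and> (\<forall>f\<in>F. \<exists>n. polyf D * f = polyf n)"
proof -
  have "\<forall>f::'c poly fract. \<exists>nd. snd nd \<noteq> 0 \<and> f = Fract (fst nd) (snd nd) \<and>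
           (\<forall>z. f \<in> loc_ring z \<longrightarrow> poly (ac (snd nd)) z \<noteq> 0)"
  proof
    fix f :: "'c poly fract"
    show "\<exists>nd. snd nd \<noteq> 0 \<and> f = Fract (fst nd) (snd nd) \<and>
           (\<forall>z. f \<in> loc_ring z \<longrightarrow> poly (ac (snd nd)) z \<noteq> 0)"
    proof -
      obtain n d where "d \<noteq> 0" "f = Fract n d" "\<And>z. f \<in> loc_ring z \<Longrightarrow> poly (ac d) z \<noteq> 0"
        using den_uniform[of f] by blast
      thus ?thesis by (intro exI[of _ "(n,d)"]) auto
    qed
  qed
  from choice[OF this] obtain R :: "'c poly fract \<Rightarrow> 'c poly \<times> 'c poly" where R0: "\<forall>f. snd (R f) \<noteq> 0 \<and> f = Fract (fst (R f)) (snd (R f)) \<and>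
           (\<forall>z. f \<in> loc_ring z \<longrightarrow> poly (ac (snd (R f))) z \<noteq> 0)" by blast
  hence R: "\<And>f. snd (R f) \<noteq> 0" "\<And>f. f = Fract (fst (R f)) (snd (R f))"
     "\<And>f z. f \<in> loc_ring z \<Longrightarrow> poly (ac (snd (R f))) z \<noteq> 0" by blast+
  define D where "D = (\<Prod>f\<in>F. snd (R f))"
  have "coprime D Q" unfolding D_def
  proof (rule coprime_prod_left)
    fix f assume "f \<in> F"
    thus "coprime (snd (R f)) Q" using assms(2,3) R(3) by (intro coprime_no_common_root) auto
  qed
  moreover have "\<forall>f\<in>F. \<exists>n. polyf D * f = polyf n"
  proof
    fix f assume f: "f \<in> F"
    have Dsplit: "D = snd (R f) * (\<Prod>g\<in>F - {f}. snd (R g))"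
      unfolding D_def using f assms(1) by (simp add: prod.remove)
    have key: "\<And>s n. s \<noteq> 0 \<Longrightarrow> polyf s * Fract n s = polyf n"
      by (simp add: polyf_def eq_fract)
    have "polyf D * f = polyf (\<Prod>g\<in>F - {f}. snd (R g)) * (polyf (snd (R f)) * Fract (fst (R f)) (snd (R f)))"
      using Dsplit R(2)[of f] by (simp add: polyf_mult mult_ac)
    also have "\<dots> = polyf ((\<Prod>g\<in>F - {f}. snd (R g)) * fst (R f))"
      using key[OF R(1)[of f]] by (simp add: polyf_mult)
    finally have "polyf D * f = polyf ((\<Prod>g\<in>F - {f}. snd (R g)) * fst (R f))" .
    thus "\<exists>n. polyf D * f = polyf n" ..
  qed
  ultimately show ?thesis by blast
qed

section \<open>evaluation in Laurent series\<close>

abbreviation PS where "PS \<equiv> poly_at_shift"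

lemma PS_add: "PS (p + q) z = PS p z + PS q z"
  by (simp add: poly_at_shift_def ac_add pcompose_add fps_of_poly_add)
lemma PS_diff: "PS (p - q) z = PS p z - PS q z"
  by (simp add: poly_at_shift_def ac_diff pcompose_diff fps_of_poly_diff)
lemma PS_mult: "PS (p * q) z = PS p z * PS q z"
  by (simp add: poly_at_shift_def ac_mult pcompose_mult fps_of_poly_mult fls_times_fps_to_fls)
lemma PS_1: "PS 1 z = 1"
  by (simp add: poly_at_shift_def pcompose_1)
lemma PS_0: "PS 0 z = 0"
  by (simp add: poly_at_shift_def)
lemma PS_eq_0_iff: "PS p z = 0 \<longleftrightarrow> p = 0"
  by (simp add: poly_at_shift_def pcompose_eq_0_iff ac_eq_0_iff fps_of_poly_eq_iff[of _ 0, simplified])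
lemma PS_shift: "PS (shiftp j p) z = PS p (z + of_int j)"
  by (simp add: poly_at_shift_def shiftp_def ac_pcompose pcompose_assoc[symmetric] pcompose_pCons
      ac_pCons algebra_simps)

lemma rat_Fract:
  assumes "d \<noteq> 0" shows "rat_at_shift (Fract n d) z = PS n z / PS d z"
proof -
  obtain n' d' where fr: "frep (Fract n d) = (n', d')" by (cases "frep (Fract n d)")
  with frep[of "Fract n d"] have d': "d' \<noteq> 0" and e: "Fract n d = Fract n' d'" by auto
  hence "n * d' = n' * d" using assms by (simp add: eq_fract)
  hence "PS n z * PS d' z = PS n' z * PS d z" by (metis PS_mult)
  moreover have "PS d z \<noteq> 0" "PS d' z \<noteq> 0" using assms d' by (simp_all add: PS_eq_0_iff)
  ultimately show ?thesis using fr by (simp add: rat_at_shift_def field_simps)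
qed

lemma rat_polyf: "rat_at_shift (polyf p) z = PS p z"
  by (simp add: polyf_def rat_Fract PS_1)
lemma rat_add: "rat_at_shift (x + y) z = rat_at_shift x z + rat_at_shift y z"
  by (cases x, cases y) (simp add: rat_Fract PS_add PS_mult PS_eq_0_iff field_simps)
lemma rat_mult: "rat_at_shift (x * y) z = rat_at_shift x z * rat_at_shift y z"
  by (cases x, cases y) (simp add: rat_Fract PS_add PS_mult PS_eq_0_iff field_simps)
lemma rat_minus: "rat_at_shift (- x) z = - rat_at_shift x z"
  by (cases x) (simp add: rat_Fract PS_eq_0_iff poly_at_shift_def ac_minus pcompose_uminus
      fps_of_poly_simps)
lemma rat_0: "rat_at_shift 0 z = 0" using rat_polyf[of 0 z] by (simp add: PS_0)
lemma rat_1: "rat_at_shift 1 z = 1" using rat_polyf[of 1 z] by (simp add: PS_1)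
lemma rat_diff: "rat_at_shift (x - y) z = rat_at_shift x z - rat_at_shift y z"
  by (simp only: diff_conv_add_uminus rat_add rat_minus)
lemma rat_sum: "rat_at_shift (sum f A) z = (\<Sum>i\<in>A. rat_at_shift (f i) z)"
  by (induction A rule: infinite_finite_induct) (simp_all add: rat_0 rat_add)
lemma rat_shiftf: "rat_at_shift (shiftf j x) z = rat_at_shift x (z + of_int j)"
  by (cases x) (simp add: rat_Fract shiftf_Fract shiftp_eq_0_iff PS_shift)
lemma rat_divide_polyf: "p \<noteq> 0 \<Longrightarrow> rat_at_shift (x / polyf p) z = rat_at_shift x z / PS p z"
  by (cases x) (simp add: rat_Fract polyf_def PS_eq_0_iff PS_mult PS_1)

section \<open>valuation\<close>

lemma nu_0[simp]: "nu_q 0 = \<infinity>" by (simp add: nu_q_def)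
lemma nu_nz: "f \<noteq> 0 \<Longrightarrow> nu_q f = ereal (of_int (fls_subdegree f))" by (simp add: nu_q_def)

lemma nu_mult: "nu_q (x * y) = nu_q x + nu_q (y :: 'a::field fls)"
  by (cases "x = 0"; cases "y = 0") (simp_all add: nu_q_def)

lemma nu_minus: "nu_q (- x) = nu_q x"
  by (simp add: nu_q_def)

lemma nu_add: "min (nu_q x) (nu_q y) \<le> nu_q (x + y :: 'a::field fls)"
proof (cases "x + y = 0")
  case True thus ?thesis by simp
next
  case False
  show ?thesis
  proof (cases "x = 0")
    case True thus ?thesis by simp
  next
    case x: False
    show ?thesis
    proof (cases "y = 0")
      case True thus ?thesis by simp
    next
      case y: False
      have "fls_subdegree (x + y) \<ge> min (fls_subdegree x) (fls_subdegree y)"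
        using False by (rule fls_plus_subdegree)
      thus ?thesis using False x y by (auto simp: nu_q_def min_def split: if_splits)
    qed
  qed
qed

lemma nu_sum: "(\<And>i. i \<in> A \<Longrightarrow> c \<le> nu_q (f i)) \<Longrightarrow> c \<le> nu_q (sum f A :: 'a::field fls)"
proof (induction A rule: infinite_finite_induct)
  case (insert x F)
  hence "c \<le> min (nu_q (f x)) (nu_q (sum f F))" by simp
  also have "\<dots> \<le> nu_q (f x + sum f F)" by (rule nu_add)
  finally show ?case using insert by simp
qed simp_all

lemma nu_PS_ge: "0 \<le> nu_q (PS p z)"
  by (simp add: nu_q_def poly_at_shift_def fls_subdegree_fls_to_fps_gt0)

lemma nu_PS_0:
  assumes "poly (ac p) z \<noteq> 0" shows "nu_q (PS p z) = 0"
proof -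
  have c: "coeff (pcompose (ac p) [:z, 1:]) 0 = poly (ac p) z"
    by (simp add: pcompose_coeff_0)
  hence "fls_nth (fps_to_fls (fps_of_poly (pcompose (ac p) [:z, 1:]))) 0 \<noteq> 0" using assms by simp
  hence "fls_subdegree (fps_to_fls (fps_of_poly (pcompose (ac p) [:z, 1:]))) = 0"
    by (intro fls_subdegree_eqI) auto
  moreover have "PS p z \<noteq> 0" using assms by (auto simp: PS_eq_0_iff)
  ultimately show ?thesis by (simp add: nu_q_def poly_at_shift_def)
qed

lemma nu_rat_loc:
  assumes "f \<in> loc_ring z" shows "0 \<le> nu_q (rat_at_shift f z)"
proof -
  obtain n d where d: "poly (ac d) z \<noteq> 0" "d \<noteq> 0" "f = Fract n d" using assms by (elim loc_ringE)
  have "PS d z \<noteq> 0" using d by (simp add: PS_eq_0_iff)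
  hence "PS n z = rat_at_shift f z * PS d z" using d by (simp add: rat_Fract)
  hence "nu_q (PS n z) = nu_q (rat_at_shift f z)" using nu_PS_0[OF d(1)] by (simp add: nu_mult)
  thus ?thesis using nu_PS_ge[of n z] by simp
qed

lemma comb_add: "comb r (\<lambda>i. c i + d i) W k = comb r c W k + comb r d W k"
  by (simp add: comb_def distrib_right sum.distrib)
lemma comb_diff: "comb r (\<lambda>i. c i - d i) W k = comb r c W k - comb r d W k"
  by (simp add: comb_def left_diff_distrib sum_subtractf)
lemma comb_zero: "comb r (\<lambda>i. 0) W k = 0"
  by (simp add: comb_def)
lemma comb_cong: "(\<And>i. i < r \<Longrightarrow> c i = d i) \<Longrightarrow> comb r c W k = comb r d W k"
  by (simp add: comb_def)
lemma fracA_comb: "fracA r u a W = comb r (\<lambda>i. polyf (a i) / polyf u) W"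
  by (simp add: fracA_def comb_def sum_divide_distrib fun_eq_iff)

lemma Sact_add: "Sact l r (\<lambda>k. f k + g k) k = Sact l r f k + Sact l r g k"
  by (simp add: Sact_def shiftf_add algebra_simps add_divide_distrib)
lemma Sact_minus: "Sact l r (\<lambda>k. - f k) k = - Sact l r f k"
  by (simp add: Sact_def shiftf_minus algebra_simps)
lemma Sact_zero: "Sact l r (\<lambda>k. 0) k = 0"
  by (simp add: Sact_def)
lemma Delta_add: "Delta l r (\<lambda>k. f k + g k) k = Delta l r f k + Delta l r g k"
  by (simp add: Delta_def Sact_add)
lemma Delta_minus: "Delta l r (\<lambda>k. - f k) k = - Delta l r f k"
  by (simp add: Delta_def Sact_minus)
lemma Delta_zero: "Delta l r (\<lambda>k. 0) k = 0"
  by (simp add: Delta_def Sact_zero)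

lemma Sact_comb:
  "Sact l r (comb r c W) k = (\<Sum>i<r. shiftf 1 (c i) * Sact l r (W i) k)"
proof -
  define A where "A i = (if k = 0 then 0 else shiftf 1 (W i (k - 1)))" for i
  define B where "B i = shiftf 1 (W i (r - 1)) * polyf (l k) / polyf (l r)" for i
  have "Sact l r (comb r c W) k = (\<Sum>i<r. shiftf 1 (c i) * A i) - (\<Sum>i<r. shiftf 1 (c i) * B i)"
    by (simp add: Sact_def comb_def A_def B_def shiftf_sum shiftf_mult sum_distrib_right
        sum_divide_distrib mult.assoc)
  also have "\<dots> = (\<Sum>i<r. shiftf 1 (c i) * (A i - B i))"
    by (simp add: sum_subtractf right_diff_distrib)
  also have "\<dots> = (\<Sum>i<r. shiftf 1 (c i) * Sact l r (W i) k)"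
    by (simp add: A_def B_def Sact_def)
  finally show ?thesis .
qed

locale redsetup =
  fixes l :: "nat \<Rightarrow> 'c::{field_char_0,field_gcd} poly" and r :: nat and W :: "nat \<Rightarrow> 'c elt"
    and e et :: "'c poly" and M Mt :: "nat \<Rightarrow> nat \<Rightarrow> 'c poly"
  assumes L0: "l 0 \<noteq> 0" and Lr: "l r \<noteq> 0"
    and basis: "is_basisA r W"
    and SW: "\<forall>i<r. eqA r (Sact l r (W i)) (comb r (\<lambda>j. polyf (M i j) / polyf e) W)"
    and inv1: "\<forall>i<r. \<forall>j<r. (\<Sum>k<r. (polyf (M i k) / polyf e) * (polyf (Mt k j) / polyf et))
                  = (if i = j then 1 else 0)"
    and inv2: "\<forall>i<r. \<forall>j<r. (\<Sum>k<r. (polyf (Mt i k) / polyf et) * (polyf (M k j) / polyf e))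
                  = (if i = j then 1 else 0)"
    and rpos: "r > 0"
begin

definition Mf where "Mf i j = polyf (M i j) / polyf e"
definition Nf where "Nf i j = polyf (Mt i j) / polyf et"

lemma e_nz: "e \<noteq> 0"
proof
  assume "e = 0"
  hence "(\<Sum>k<r. (polyf (M 0 k) / polyf e) * (polyf (Mt k 0) / polyf et)) = 0" by simp
  thus False using inv1 rpos by auto
qed

lemma et_nz: "et \<noteq> 0"
proof
  assume "et = 0"
  hence "(\<Sum>k<r. (polyf (M 0 k) / polyf e) * (polyf (Mt k 0) / polyf et)) = 0" by simp
  thus False using inv1 rpos by auto
qed

lemma inv2': "i < r \<Longrightarrow> j < r \<Longrightarrow> (\<Sum>k<r. Nf i k * Mf k j) = (if i = j then 1 else 0)"
  using inv2 by (simp add: Nf_def Mf_def)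

lemma comb_unique:
  assumes "eqA r (comb r c W) (comb r d W)" "i < r" shows "c i = d i"
proof -
  have "eqA r (comb r (\<lambda>i. c i - d i) W) (\<lambda>_. 0)"
    using assms(1) by (simp add: eqA_def comb_diff)
  hence "c i - d i = 0" using basis assms(2) unfolding is_basisA_def by blast
  thus ?thesis by simp
qed

lemma Sact_W: "k < r \<Longrightarrow> i < r \<Longrightarrow> Sact l r (W i) k = comb r (Mf i) W k"
  using SW by (simp add: eqA_def Mf_def[abs_def])

lemma Sact_comb_W:
  assumes "k < r"
  shows "Sact l r (comb r c W) k = comb r (\<lambda>j. \<Sum>i<r. shiftf 1 (c i) * Mf i j) W k"
proof -
  have "Sact l r (comb r c W) k = (\<Sum>i<r. shiftf 1 (c i) * comb r (Mf i) W k)"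
    using assms by (simp add: Sact_comb Sact_W)
  also have "\<dots> = (\<Sum>i<r. \<Sum>j<r. shiftf 1 (c i) * Mf i j * W j k)"
    by (simp add: comb_def sum_distrib_left mult.assoc)
  also have "\<dots> = (\<Sum>j<r. \<Sum>i<r. shiftf 1 (c i) * Mf i j * W j k)"
    by (rule sum.swap)
  also have "\<dots> = comb r (\<lambda>j. \<Sum>i<r. shiftf 1 (c i) * Mf i j) W k"
    by (simp add: comb_def sum_distrib_right)
  finally show ?thesis .
qed

definition good :: "'c poly \<Rightarrow> (nat \<Rightarrow> 'c poly fract) \<Rightarrow> bool" where
  "good D XX \<longleftrightarrow> (\<exists>g c. eqA r (comb r XX W) (addA (Delta l r g) (comb r (\<lambda>i. polyf (c i) / polyf D) W)))"

definition RR :: "'c poly \<Rightarrow> 'c poly \<Rightarrow> bool" where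
  "RR D u \<longleftrightarrow> (\<forall>a. good D (\<lambda>i. polyf (a i) / polyf u))"

lemma good_add:
  assumes "good D XX" "good D YY" shows "good D (\<lambda>i. XX i + YY i)"
proof -
  obtain g c where 1: "eqA r (comb r XX W) (addA (Delta l r g) (comb r (\<lambda>i. polyf (c i) / polyf D) W))"
    using assms(1) by (auto simp: good_def)
  obtain g' c' where 2: "eqA r (comb r YY W) (addA (Delta l r g') (comb r (\<lambda>i. polyf (c' i) / polyf D) W))"
    using assms(2) by (auto simp: good_def)
  have "eqA r (comb r (\<lambda>i. XX i + YY i) W)
     (addA (Delta l r (\<lambda>k. g k + g' k)) (comb r (\<lambda>i. polyf (c i + c' i) / polyf D) W))"
    unfolding eqA_def
  proof (intro allI impI)
    fix k assume k: "k < r"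
    have cc: "comb r (\<lambda>i. polyf (c i + c' i) / polyf D) W k
        = comb r (\<lambda>i. polyf (c i) / polyf D) W k + comb r (\<lambda>i. polyf (c' i) / polyf D) W k"
      by (simp only: polyf_add add_divide_distrib comb_add)
    show "comb r (\<lambda>i. XX i + YY i) W k =
        addA (Delta l r (\<lambda>k. g k + g' k)) (comb r (\<lambda>i. polyf (c i + c' i) / polyf D) W) k"
      using 1 2 k unfolding eqA_def addA_def cc comb_add Delta_add by simp
  qed
  thus ?thesis by (auto simp: good_def)
qed

lemma good_poly:
  assumes "D = D' * t" "D \<noteq> 0" shows "good D (\<lambda>i. polyf (a i) / polyf D')"
proof -
  have t: "t \<noteq> 0" "D' \<noteq> 0" using assms by auto
  have "eqA r (comb r (\<lambda>i. polyf (a i) / polyf D') W)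
          (addA (Delta l r (\<lambda>k. 0)) (comb r (\<lambda>i. polyf (a i * t) / polyf D) W))"
    using t by (simp add: eqA_def addA_def Delta_zero assms(1) polyf_mult polyf_eq_0_iff)
  thus ?thesis by (auto simp: good_def)
qed

lemma good_shift:
  assumes "\<And>k. k < r \<Longrightarrow> comb r XX W k = Delta l r g k + comb r YY W k" "good D YY"
  shows "good D XX"
proof -
  obtain g' c where 1: "eqA r (comb r YY W) (addA (Delta l r g') (comb r (\<lambda>i. polyf (c i) / polyf D) W))"
    using assms(2) by (auto simp: good_def)
  have "eqA r (comb r XX W) (addA (Delta l r (\<lambda>k. g k + g' k)) (comb r (\<lambda>i. polyf (c i) / polyf D) W))"
    using 1 assms(1) by (simp add: eqA_def addA_def Delta_add)
  thus ?thesis by (auto simp: good_def)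
qed

lemma good_cong: "(\<And>i. i < r \<Longrightarrow> XX i = YY i) \<Longrightarrow> good D YY \<Longrightarrow> good D XX"
  unfolding good_def by (metis (no_types, lifting) comb_cong eqA_def)


lemma RR_base: "D = u * t \<Longrightarrow> D \<noteq> 0 \<Longrightarrow> RR D u"
  unfolding RR_def using good_poly by blast

lemma bezout_cop:
  assumes "coprime (A::'c poly) B" obtains u v where "u * A + v * B = 1"
  using bezout_coefficients_fst_snd[of A B] assms by (metis coprime_iff_gcd_eq_1)

lemma sum_delta_r: "j < r \<Longrightarrow> (\<Sum>k<r. f k * (if k = j then 1 else 0)) = (f j :: 'c poly fract)"
  by (simp add: if_distrib[of "\<lambda>x. f _ * x"] sum.delta cong: if_cong)

lemma down_step:
  assumes Q0: "Q \<noteq> 0" and D0: "D \<noteq> 0" and IH: "RR D (shiftp (-1) Q)"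
    and cop: "coprime D0 Q" and reg: "\<forall>i<r. \<forall>j<r. \<exists>n. polyf D0 * Nf i j = polyf n"
  shows "RR D Q"
  unfolding RR_def
proof
  fix a :: "nat \<Rightarrow> 'c poly"
  obtain u v where uv: "u * D0 + v * Q = 1" using cop by (rule bezout_cop)
  define n where "n i j = (SOME n. polyf D0 * Nf i j = polyf n)" for i j
  have n: "polyf D0 * Nf i j = polyf (n i j)" if "i < r" "j < r" for i j
    using reg that unfolding n_def by (metis (mono_tags) someI_ex)
  define B where "B i = u * (\<Sum>k<r. a k * n k i)" for i
  define YY where "YY i = polyf (shiftp (-1) (B i)) / polyf (shiftp (-1) Q)" for i
  define XX where "XX i = polyf (a i) / polyf Q" for i
  define Z where "Z j = polyf (a j * v) / polyf 1" for j
  have Qf: "polyf Q \<noteq> 0" using Q0 by (simp add: polyf_eq_0_iff)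
  have sY: "shiftf 1 (YY i) = polyf (B i) / polyf Q" for i
    by (simp add: YY_def shiftf_divide shiftf_polyf shiftp_shiftp shiftp_zero_shift)
  have coef: "XX j = (\<Sum>i<r. shiftf 1 (YY i) * Mf i j) + Z j" if j: "j < r" for j
  proof -
    have "(\<Sum>i<r. shiftf 1 (YY i) * Mf i j)
        = (\<Sum>i<r. \<Sum>k<r. polyf u / polyf Q * polyf (a k) * (polyf (n k i) * Mf i j))"
      by (simp add: sY B_def polyf_mult polyf_sum sum_distrib_left sum_distrib_right
          sum_divide_distrib mult_ac)
    also have "\<dots> = (\<Sum>k<r. \<Sum>i<r. polyf u / polyf Q * polyf (a k) * (polyf (n k i) * Mf i j))"
      by (rule sum.swap)
    also have "\<dots> = (\<Sum>k<r. polyf u / polyf Q * polyf (a k) * (\<Sum>i<r. polyf (n k i) * Mf i j))"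
      by (simp add: sum_distrib_left)
    also have "\<dots> = (\<Sum>k<r. polyf u / polyf Q * polyf (a k) * polyf D0 * (if k = j then 1 else 0))"
    proof (rule sum.cong[OF refl])
      fix k assume "k \<in> {..<r}"
      hence k: "k < r" by simp
      have "(\<Sum>i<r. polyf (n k i) * Mf i j) = (\<Sum>i<r. polyf D0 * (Nf k i * Mf i j))"
        by (rule sum.cong[OF refl]) (use k n in \<open>auto simp: mult.assoc\<close>)
      also have "\<dots> = polyf D0 * (if k = j then 1 else 0)"
        using inv2'[OF k j] by (simp add: sum_distrib_left[symmetric])
      finally show "polyf u / polyf Q * polyf (a k) * (\<Sum>i<r. polyf (n k i) * Mf i j) =
          polyf u / polyf Q * polyf (a k) * polyf D0 * (if k = j then 1 else 0)" by (simp add: mult.assoc)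
    qed
    also have "\<dots> = polyf u / polyf Q * polyf (a j) * polyf D0"
      using sum_delta_r[OF j, of "\<lambda>k. polyf u / polyf Q * polyf (a k) * polyf D0"] by simp
    finally have 1: "(\<Sum>i<r. shiftf 1 (YY i) * Mf i j) = polyf u / polyf Q * polyf (a j) * polyf D0" .
    have uv': "polyf u * polyf D0 + polyf v * polyf Q = 1"
      using arg_cong[OF uv, of polyf] by (simp add: polyf_add polyf_mult)
    have "XX j = polyf (a j) * (polyf u * polyf D0 + polyf v * polyf Q) / polyf Q"
      by (simp add: XX_def uv')
    also have "\<dots> = polyf u / polyf Q * polyf (a j) * polyf D0 + Z j"
      using Qf by (simp add: Z_def polyf_mult field_simps)
    finally show ?thesis using 1 by simp
  qed
  have main: "comb r XX W k = Delta l r (comb r YY W) k + comb r (\<lambda>i. Z i + YY i) W k" if k: "k < r" for k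
  proof -
    have "Delta l r (comb r YY W) k + comb r (\<lambda>i. Z i + YY i) W k
        = comb r (\<lambda>j. \<Sum>i<r. shiftf 1 (YY i) * Mf i j) W k + comb r Z W k"
      using k by (simp add: Delta_def Sact_comb_W comb_add)
    also have "\<dots> = comb r (\<lambda>j. (\<Sum>i<r. shiftf 1 (YY i) * Mf i j) + Z j) W k"
      by (simp add: comb_add)
    also have "\<dots> = comb r XX W k"
      by (rule comb_cong) (simp add: coef)
    finally show ?thesis by simp
  qed
  have gZ: "good D Z" unfolding Z_def by (rule good_poly[OF _ D0]) simp
  have gY: "good D YY" unfolding YY_def using IH[unfolded RR_def, rule_format, of "\<lambda>i. shiftp (-1) (B i)"] by simp
  have gZY: "good D (\<lambda>i. Z i + YY i)" using gZ gY by (rule good_add)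
  have "good D XX" by (rule good_shift[OF main gZY])
  thus "good D (\<lambda>i. polyf (a i) / polyf Q)" by (simp add: XX_def[abs_def])
qed

lemma up_core:
  fixes a :: "nat \<Rightarrow> 'c poly" and Q D :: "'c poly"
  defines "XX \<equiv> \<lambda>i. polyf (a i) / polyf Q"
  defines "S \<equiv> \<lambda>j. (\<Sum>i<r. polyf (shiftp 1 (a i)) * Mf i j)"
  assumes "good D (\<lambda>j. S j / polyf (shiftp 1 Q))"
  shows "good D XX"
proof -
  have main: "comb r XX W k = Delta l r (\<lambda>k. - comb r XX W k) k + comb r (\<lambda>j. S j / polyf (shiftp 1 Q)) W k"
    if k: "k < r" for k
  proof -
    have "Delta l r (\<lambda>k. - comb r XX W k) k = - Sact l r (comb r XX W) k + comb r XX W k"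
      using Delta_minus[of l r "comb r XX W" k] by (simp add: Delta_def)
    also have "Sact l r (comb r XX W) k = comb r (\<lambda>j. S j / polyf (shiftp 1 Q)) W k"
      using k by (simp add: Sact_comb_W XX_def S_def shiftf_divide shiftf_polyf sum_divide_distrib mult_ac)
    finally show ?thesis by simp
  qed
  show ?thesis by (rule good_shift[where XX=XX and g="\<lambda>k. - comb r XX W k" and YY="\<lambda>j. S j / polyf (shiftp 1 Q)", OF main assms(3)])
qed

lemma up_step:
  assumes Q0: "Q \<noteq> 0" and D0: "D \<noteq> 0" and IH: "RR D (shiftp 1 Q)"
    and cop: "coprime D1 (shiftp 1 Q)" and reg: "\<forall>i<r. \<forall>j<r. \<exists>m. polyf D1 * Mf i j = polyf m"
    and eD: "D = e * t"
  shows "RR D Q"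
  unfolding RR_def
proof
  fix a :: "nat \<Rightarrow> 'c poly"
  define S where "S j = (\<Sum>i<r. polyf (shiftp 1 (a i)) * Mf i j)" for j
  obtain u v where uv: "u * D1 + v * shiftp 1 Q = 1" using cop by (rule bezout_cop)
  define m where "m i j = (SOME m. polyf D1 * Mf i j = polyf m)" for i j
  have m: "polyf D1 * Mf i j = polyf (m i j)" if "i < r" "j < r" for i j
    using reg that unfolding m_def by (metis (mono_tags) someI_ex)
  define c' where "c' j = u * (\<Sum>i<r. shiftp 1 (a i) * m i j)" for j
  define w where "w j = v * (\<Sum>i<r. shiftp 1 (a i) * M i j)" for j
  have Qf: "polyf (shiftp 1 Q) \<noteq> 0" using Q0 by (simp add: polyf_eq_0_iff shiftp_eq_0_iff)
  have ef: "polyf e \<noteq> 0" using e_nz by (simp add: polyf_eq_0_iff)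
  have coef: "S j / polyf (shiftp 1 Q) = polyf (c' j) / polyf (shiftp 1 Q) + polyf (w j) / polyf e"
    if j: "j < r" for j
  proof -
    have 1: "polyf (c' j) = polyf u * polyf D1 * S j"
    proof -
      have "polyf (c' j) = polyf u * (\<Sum>i<r. polyf (shiftp 1 (a i)) * polyf (m i j))"
        by (simp add: c'_def polyf_mult polyf_sum)
      also have "(\<Sum>i<r. polyf (shiftp 1 (a i)) * polyf (m i j)) = (\<Sum>i<r. polyf D1 * (polyf (shiftp 1 (a i)) * Mf i j))"
        by (rule sum.cong[OF refl]) (use j m in \<open>auto simp: mult_ac\<close>)
      finally show ?thesis by (simp add: S_def sum_distrib_left mult.assoc)
    qed
    have 2: "polyf (w j) / polyf e = polyf v * S j"
      by (simp add: w_def S_def polyf_mult polyf_sum Mf_def sum_distrib_left sum_divide_distrib mult_ac)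
    have uv': "polyf u * polyf D1 + polyf v * polyf (shiftp 1 Q) = 1"
      using arg_cong[OF uv, of polyf] by (simp add: polyf_add polyf_mult)
    have "S j / polyf (shiftp 1 Q) = S j * (polyf u * polyf D1 + polyf v * polyf (shiftp 1 Q)) / polyf (shiftp 1 Q)"
      by (simp add: uv')
    also have "\<dots> = polyf u * polyf D1 * S j / polyf (shiftp 1 Q) + polyf v * S j"
      using Qf by (simp add: field_simps)
    finally show ?thesis using 1 2 by simp
  qed
  have "good D (\<lambda>j. polyf (c' j) / polyf (shiftp 1 Q) + polyf (w j) / polyf e)"
    using IH good_poly[OF eD D0] unfolding RR_def by (intro good_add) auto
  hence "good D (\<lambda>j. S j / polyf (shiftp 1 Q))" by (rule good_cong[rotated]) (simp add: coef)
  thus "good D (\<lambda>i. polyf (a i) / polyf Q)" unfolding S_def by (rule up_core)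
qed

lemma up_last:
  assumes Q0: "Q \<noteq> 0" and D0: "D \<noteq> 0" and eD: "D = (e * shiftp 1 Q) * t"
  shows "RR D Q"
  unfolding RR_def
proof
  fix a :: "nat \<Rightarrow> 'c poly"
  define S where "S j = (\<Sum>i<r. polyf (shiftp 1 (a i)) * Mf i j)" for j
  have "S j / polyf (shiftp 1 Q) = polyf (\<Sum>i<r. shiftp 1 (a i) * M i j) / polyf (e * shiftp 1 Q)" for j
    by (simp add: S_def polyf_mult polyf_sum Mf_def sum_divide_distrib mult_ac)
  hence "good D (\<lambda>j. S j / polyf (shiftp 1 Q))"
    using good_poly[OF eD D0, of "\<lambda>j. \<Sum>i<r. shiftp 1 (a i) * M i j"] by simp
  thus "good D (\<lambda>i. polyf (a i) / polyf Q)" unfolding S_def by (rule up_core)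
qed

end

definition Sinv :: "(nat \<Rightarrow> 'c::field poly) \<Rightarrow> nat \<Rightarrow> 'c elt \<Rightarrow> 'c elt" where
  "Sinv l r f = (\<lambda>k. (if k + 1 < r then shiftf (-1) (f (k + 1)) else 0)
                     - shiftf (-1) (f 0 * polyf (l (k + 1)) / polyf (l 0)))"

lemma Sact_Sinv:
  fixes l :: "nat \<Rightarrow> 'c::field poly"
  assumes "l 0 \<noteq> 0" "l r \<noteq> 0" "k < r"
  shows "Sact l r (Sinv l r f) k = f k"
proof -
  have r: "r - 1 + 1 = r" using assms by simp
  have s1: "shiftf 1 (shiftf (-1) x) = x" for x :: "'c poly fract"
    by (simp add: shiftf_shiftf shiftf_zero_shift)
  have l0: "polyf (l 0) \<noteq> 0" "polyf (l r) \<noteq> 0" using assms by (simp_all add: polyf_eq_0_iff)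
  have last: "shiftf 1 (Sinv l r f (r - 1)) = - (f 0 * polyf (l r) / polyf (l 0))"
    unfolding Sinv_def using r by (simp add: shiftf_diff shiftf_minus s1)
  show ?thesis
  proof (cases "k = 0")
    case True
    thus ?thesis unfolding Sact_def last using l0 by (simp add: field_simps)
  next
    case False
    hence k1: "k - 1 + 1 = k" by simp
    have "shiftf 1 (Sinv l r f (k - 1)) = f k - f 0 * polyf (l k) / polyf (l 0)"
      unfolding Sinv_def using k1 assms(3) by (simp add: shiftf_diff s1)
    thus ?thesis unfolding Sact_def last using l0 False by (simp add: field_simps)
  qed
qed

lemma Sinv_loc:
  assumes "\<And>k. k < r \<Longrightarrow> f k \<in> loc_ring z" "poly (ac (l 0)) z \<noteq> 0" "0 < r"
  shows "Sinv l r f k \<in> loc_ring (z + 1)"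
proof -
  have sh: "g \<in> loc_ring z \<Longrightarrow> shiftf (-1) g \<in> loc_ring (z + 1)" for g
    by (rule loc_shift) simp
  have "f 0 * polyf (l (k + 1)) / polyf (l 0) \<in> loc_ring z"
    using assms by (intro loc_div loc_mult loc_polyf) auto
  thus ?thesis unfolding Sinv_def using assms(1)
    by (intro loc_diff) (auto intro: sh loc_0)
qed

lemma sum_delta_left: "j < (r::nat) \<Longrightarrow> (\<Sum>i<r. (if i = j then 1 else 0) * f i) = (f j :: 'a::comm_ring_1)"
proof -
  assume j: "j < r"
  have "(\<Sum>i<r. (if i = j then 1 else 0) * f i) = (\<Sum>i<r. (if i = j then f j else 0))"
    by (rule sum.cong) auto
  thus ?thesis using j by (simp add: sum.delta)
qed

lemma sum_delta_right: "j < (r::nat) \<Longrightarrow> (\<Sum>i<r. f i * (if i = j then 1 else 0)) = (f j :: 'a::comm_ring_1)"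
  using sum_delta_left[of j r f] by (simp add: mult.commute)

lemma Sact_eqA: "0 < r \<Longrightarrow> eqA r f g \<Longrightarrow> eqA r (Sact l r f) (Sact l r g)"
  by (simp add: eqA_def Sact_def)

lemma same_moduleD1:
  assumes "same_module_as_std r z W" "\<forall>i<r. c i \<in> loc_ring z" "eqA r f (comb r c W)"
  shows "\<exists>c'. (\<forall>i<r. c' i \<in> loc_ring z) \<and> (\<forall>k<r. f k = c' k)"
proof -
  have iff: "(\<exists>c. (\<forall>i<r. c i \<in> loc_ring z) \<and> eqA r f (comb r c W))
          \<longleftrightarrow> (\<exists>c. (\<forall>i<r. c i \<in> loc_ring z) \<and> (\<forall>k<r. f k = c k))"
    using assms(1) unfolding same_module_as_std_def by (rule spec)
  have "\<exists>c. (\<forall>i<r. c i \<in> loc_ring z) \<and> eqA r f (comb r c W)" using assms(2,3) by blast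
  thus ?thesis by (rule iffD1[OF iff])
qed

lemma same_moduleD2:
  assumes "same_module_as_std r z W" "\<forall>k<r. f k \<in> loc_ring z"
  shows "\<exists>c. (\<forall>i<r. c i \<in> loc_ring z) \<and> eqA r f (comb r c W)"
proof -
  have iff: "(\<exists>c. (\<forall>i<r. c i \<in> loc_ring z) \<and> eqA r f (comb r c W))
          \<longleftrightarrow> (\<exists>c. (\<forall>i<r. c i \<in> loc_ring z) \<and> (\<forall>k<r. f k = c k))"
    using assms(1) unfolding same_module_as_std_def by (rule spec)
  have "\<exists>c. (\<forall>i<r. c i \<in> loc_ring z) \<and> (\<forall>k<r. f k = c k)" using assms(2) by (intro exI[of _ f]) simp
  thus ?thesis by (rule iffD2[OF iff])
qed

lemma std_coords:
  assumes "same_module_as_std r z W" "j < r"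
  shows "\<And>k. k < r \<Longrightarrow> W j k \<in> loc_ring z"
proof -
  have e1: "eqA r (W j) (comb r (\<lambda>i. if i = j then 1 else 0) W)"
    unfolding eqA_def comb_def
  proof (intro allI impI)
    fix k show "W j k = (\<Sum>i<r. (if i = j then 1 else 0) * W i k)"
      by (rule sym[OF sum_delta_left[OF assms(2)]])
  qed
  have e2: "\<forall>i<r. (\<lambda>i. if i = j then 1 else 0) i \<in> loc_ring z"
  proof (intro allI impI)
    fix i show "(\<lambda>i. if i = j then 1 else 0) i \<in> loc_ring z" by (cases "i = j") (simp_all add: loc_0 loc_1)
  qed
  obtain c where "\<forall>i<r. c i \<in> loc_ring z" "\<forall>k<r. W j k = c k"
    using same_moduleD1[OF assms(1) e2 e1] by blast
  thus "\<And>k. k < r \<Longrightarrow> W j k \<in> loc_ring z" by auto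
qed

context redsetup begin

lemma inv1': "i < r \<Longrightarrow> j < r \<Longrightarrow> (\<Sum>k<r. Mf i k * Nf k j) = (if i = j then 1 else 0)"
  using inv1 by (simp add: Nf_def Mf_def)

lemma W_comb: "j < r \<Longrightarrow> W j k = comb r (\<lambda>i. if i = j then 1 else 0) W k"
  unfolding comb_def by (rule sym[OF sum_delta_left])

lemma M_reg_std:
  assumes "same_module_as_std r z W" "same_module_as_std r (z + 1) W" "poly (ac (l r)) z \<noteq> 0"
  shows "\<forall>i<r. \<forall>j<r. Mf i j \<in> loc_ring z"
proof (intro allI impI)
  fix i j assume i: "i < r" and j: "j < r"
  have Wi: "\<And>k. k < r \<Longrightarrow> W i k \<in> loc_ring (z + 1)" using std_coords[OF assms(2) i] .
  have sh: "g \<in> loc_ring (z + 1) \<Longrightarrow> shiftf 1 g \<in> loc_ring z" for g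
    by (rule loc_shift) simp
  have "\<forall>k<r. Sact l r (W i) k \<in> loc_ring z"
  proof (intro allI impI)
    fix k assume k: "k < r"
    have a: "(if k = 0 then 0 else shiftf 1 (W i (k - 1))) \<in> loc_ring z"
      using Wi k by (auto intro: sh loc_0)
    have b: "shiftf 1 (W i (r - 1)) * polyf (l k) / polyf (l r) \<in> loc_ring z"
      using Wi rpos assms(3) by (intro loc_div loc_mult loc_polyf sh) auto
    show "Sact l r (W i) k \<in> loc_ring z" unfolding Sact_def using a b by (rule loc_diff)
  qed
  then obtain c where c: "\<forall>k<r. c k \<in> loc_ring z" "eqA r (Sact l r (W i)) (comb r c W)"
    using same_moduleD2[OF assms(1)] by blast
  have "eqA r (comb r (Mf i) W) (comb r c W)"
    using c(2) SW i by (simp add: eqA_def Mf_def[abs_def])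
  hence "Mf i j = c j" using j by (rule comb_unique)
  thus "Mf i j \<in> loc_ring z" using c(1) j by simp
qed

lemma N_reg_from:
  assumes "\<forall>j<r. \<exists>h d. (\<forall>i<r. d i \<in> loc_ring (z + 1)) \<and> eqA r h (comb r d W) \<and> eqA r (Sact l r h) (W j)"
  shows "\<forall>i<r. \<forall>j<r. Nf i j \<in> loc_ring z"
proof (intro allI impI)
  fix j i' assume j: "j < r" and i': "i' < r"
  obtain h d where hd: "\<forall>i<r. d i \<in> loc_ring (z + 1)" "eqA r h (comb r d W)" "eqA r (Sact l r h) (W j)"
    using assms j by blast
  have "eqA r (Sact l r h) (Sact l r (comb r d W))" using Sact_eqA[OF rpos hd(2)] .
  hence "eqA r (comb r (\<lambda>m. \<Sum>i<r. shiftf 1 (d i) * Mf i m) W) (comb r (\<lambda>i. if i = j then 1 else 0) W)"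
    using hd(3) j by (simp add: eqA_def Sact_comb_W W_comb)
  hence dl: "m < r \<Longrightarrow> (\<Sum>i<r. shiftf 1 (d i) * Mf i m) = (if m = j then 1 else 0)" for m
    by (rule comb_unique)
  have "Nf j i' = (\<Sum>m<r. (if m = j then 1 else 0) * Nf m i')"
    by (rule sym[OF sum_delta_left[OF j]])
  also have "\<dots> = (\<Sum>m<r. (\<Sum>i<r. shiftf 1 (d i) * Mf i m) * Nf m i')"
    by (rule sum.cong) (simp_all add: dl)
  also have "\<dots> = (\<Sum>m<r. \<Sum>i<r. shiftf 1 (d i) * (Mf i m * Nf m i'))"
    by (simp add: sum_distrib_right mult.assoc)
  also have "\<dots> = (\<Sum>i<r. \<Sum>m<r. shiftf 1 (d i) * (Mf i m * Nf m i'))"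
    by (rule sum.swap)
  also have "\<dots> = (\<Sum>i<r. shiftf 1 (d i) * (\<Sum>m<r. Mf i m * Nf m i'))"
    by (simp add: sum_distrib_left)
  also have "\<dots> = (\<Sum>i<r. shiftf 1 (d i) * (if i = i' then 1 else 0))"
    by (rule sum.cong) (simp_all add: inv1' i')
  also have "\<dots> = shiftf 1 (d i')"
    by (rule sum_delta_right[OF i'])
  finally have "Nf j i' = shiftf 1 (d i')" .
  moreover have "shiftf 1 (d i') \<in> loc_ring z" using hd(1) i' by (intro loc_shift) simp
  ultimately show "Nf j i' \<in> loc_ring z" by simp
qed

lemma N_reg_std:
  assumes "same_module_as_std r z W" "same_module_as_std r (z + 1) W" "poly (ac (l 0)) z \<noteq> 0"
  shows "\<forall>i<r. \<forall>j<r. Nf i j \<in> loc_ring z"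
proof (rule N_reg_from, intro allI impI)
  fix j assume j: "j < r"
  define h where "h = Sinv l r (W j)"
  have hl: "\<forall>k<r. h k \<in> loc_ring (z + 1)"
    unfolding h_def using std_coords[OF assms(1) j] assms(3) rpos by (auto intro: Sinv_loc)
  then obtain d where d: "\<forall>i<r. d i \<in> loc_ring (z + 1)" "eqA r h (comb r d W)"
    using same_moduleD2[OF assms(2)] by blast
  have "eqA r (Sact l r h) (W j)" unfolding h_def eqA_def using L0 Lr by (simp add: Sact_Sinv)
  thus "\<exists>h d. (\<forall>i<r. d i \<in> loc_ring (z + 1)) \<and> eqA r h (comb r d W) \<and> eqA r (Sact l r h) (W j)"
    using d by blast
qed

lemma N_reg_int:
  assumes "\<forall>j<r. integral_at l r z (W j)" "local_integral_basis l r (z + 1) W"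
    and shiftint: "\<And>h. integral_at l r z (Sact l r h) \<Longrightarrow> integral_at l r (z + 1) h"
    and cong: "\<And>f g. eqA r f g \<Longrightarrow> integral_at l r z f \<Longrightarrow> integral_at l r z g"
  shows "\<forall>i<r. \<forall>j<r. Nf i j \<in> loc_ring z"
proof (rule N_reg_from, intro allI impI)
  fix j assume j: "j < r"
  define h where "h = Sinv l r (W j)"
  have e: "eqA r (Sact l r h) (W j)" unfolding h_def eqA_def using L0 Lr by (simp add: Sact_Sinv)
  hence "eqA r (W j) (Sact l r h)" by (simp add: eqA_def)
  hence "integral_at l r z (Sact l r h)" using assms(1) j cong by blast
  hence "integral_at l r (z + 1) h" by (rule shiftint)
  then obtain d where d: "\<forall>i<r. d i \<in> loc_ring (z + 1)" "eqA r h (comb r d W)"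
    using assms(2) unfolding local_integral_basis_def by blast
  thus "\<exists>h d. (\<forall>i<r. d i \<in> loc_ring (z + 1)) \<and> eqA r h (comb r d W) \<and> eqA r (Sact l r h) (W j)"
    using e by blast
qed

lemma chain_down:
  assumes D: "D = q * e * et" "q \<noteq> 0"
    and cond: "\<And>j z. 1 \<le> j \<Longrightarrow> j \<le> k \<Longrightarrow> poly (ac (shiftp (int j) q)) z = 0 \<Longrightarrow>
                  \<forall>i<r. \<forall>j'<r. Nf i j' \<in> loc_ring z"
  shows "RR D (shiftp (int k) q)"
  using cond
proof (induction k)
  case 0
  have "D \<noteq> 0" using D e_nz et_nz by simp
  thus ?case using D by (intro RR_base[of D _ "e * et"]) (simp_all add: shiftp_zero_shift mult.assoc)
next
  case (Suc k)
  define Q where "Q = shiftp (int (Suc k)) q"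
  have Q0: "Q \<noteq> 0" using D by (simp add: Q_def shiftp_eq_0_iff)
  have D0: "D \<noteq> 0" using D e_nz et_nz by simp
  have IH: "RR D (shiftp (-1) Q)"
    using Suc.IH Suc.prems unfolding Q_def by (simp add: shiftp_shiftp)
  define F where "F = (\<lambda>(i, j). Nf i j) ` ({..<r} \<times> {..<r})"
  have "\<exists>D0. coprime D0 Q \<and> (\<forall>f\<in>F. \<exists>n. polyf D0 * f = polyf n)"
  proof (rule uniform_denominator)
    show "finite F" by (simp add: F_def)
    show "Q \<noteq> 0" by (fact Q0)
    fix f z assume "f \<in> F" "poly (ac Q) z = 0"
    thus "f \<in> loc_ring z" using Suc.prems[of "Suc k" z] unfolding F_def Q_def by auto
  qed
  then obtain D0 where "coprime D0 Q" "\<forall>f\<in>F. \<exists>n. polyf D0 * f = polyf n" by blast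
  moreover hence "\<forall>i<r. \<forall>j<r. \<exists>n. polyf D0 * Nf i j = polyf n" by (auto simp: F_def)
  ultimately have "RR D Q" using down_step[OF Q0 D0 IH] by blast
  thus ?case by (simp add: Q_def)
qed

lemma chain_up:
  assumes D: "D = q * e * et" "q \<noteq> 0" and k: "1 \<le> k"
    and cond: "\<And>j z. 1 \<le> j \<Longrightarrow> j < k \<Longrightarrow> poly (ac (shiftp (- int j) q)) z = 0 \<Longrightarrow>
                  \<forall>i<r. \<forall>j'<r. Mf i j' \<in> loc_ring z"
  shows "RR D (shiftp (- int k) q)"
  using k cond
proof (induction k rule: dec_induct)
  case base
  have "D \<noteq> 0" using D e_nz et_nz by simp
  moreover have "shiftp 1 (shiftp (- int 1) q) = q" by (simp add: shiftp_shiftp shiftp_zero_shift)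
  ultimately show ?case using D
    by (intro up_last[of _ D et]) (auto simp: shiftp_eq_0_iff mult_ac)
next
  case (step k)
  define Q where "Q = shiftp (- int (Suc k)) q"
  have Q0: "Q \<noteq> 0" using D by (simp add: Q_def shiftp_eq_0_iff)
  have D0: "D \<noteq> 0" using D e_nz et_nz by simp
  have sQ: "shiftp 1 Q = shiftp (- int k) q" unfolding Q_def by (simp add: shiftp_shiftp)
  have IH: "RR D (shiftp 1 Q)" unfolding sQ using step by simp
  define F where "F = (\<lambda>(i, j). Mf i j) ` ({..<r} \<times> {..<r})"
  have "\<exists>D1. coprime D1 (shiftp 1 Q) \<and> (\<forall>f\<in>F. \<exists>n. polyf D1 * f = polyf n)"
  proof (rule uniform_denominator)
    show "finite F" by (simp add: F_def)
    show "shiftp 1 Q \<noteq> 0" using Q0 by (simp add: shiftp_eq_0_iff)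
    fix f z assume "f \<in> F" "poly (ac (shiftp 1 Q)) z = 0"
    thus "f \<in> loc_ring z" using step.prems[of k z] step.hyps unfolding F_def sQ by auto
  qed
  then obtain D1 where "coprime D1 (shiftp 1 Q)" "\<forall>f\<in>F. \<exists>n. polyf D1 * f = polyf n" by blast
  moreover hence "\<forall>i<r. \<forall>j<r. \<exists>n. polyf D1 * Mf i j = polyf n" by (auto simp: F_def)
  ultimately have "RR D Q" using up_step[OF Q0 D0 IH, of D1 "q * et"] D by (auto simp: mult_ac)
  thus ?case by (simp add: Q_def)
qed

end

lemma act_at_cong: "eqA r f g \<Longrightarrow> act_at r f z b = act_at r g z b"
  unfolding act_at_def eqA_def by (intro sum.cong) auto

lemma valA_cong: "eqA r f g \<Longrightarrow> valA l r z f = valA l r z g"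
  unfolding valA_def using act_at_cong[of r f g z] by simp

lemma integral_cong: "eqA r f g \<Longrightarrow> integral_at l r z f \<Longrightarrow> integral_at l r z g"
  unfolding integral_at_def using valA_cong by metis

lemma rat_if0: "rat_at_shift (if P then 0 else x) z = (if P then 0 else rat_at_shift x z)"
  by (simp add: rat_0)

lemma act_Sact:
  fixes l :: "nat \<Rightarrow> 'c::field poly"
  assumes Lr: "l r \<noteq> 0" and r: "0 < r" and b: "b \<in> SolA l r z"
  shows "act_at r (Sact l r h) z b = act_at r h (z + 1) (\<lambda>n. b (n + 1))"
proof -
  obtain r' where r': "r = Suc r'" using r by (cases r) auto
  define F where "F k = rat_at_shift (h k) (z + 1)" for k
  have PSr: "PS (l r) z \<noteq> 0" using Lr by (simp add: PS_eq_0_iff)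
  have rs: "rat_at_shift (Sact l r h k) z =
        (if k = 0 then 0 else F (k - 1)) - F r' * PS (l k) z / PS (l r) z" for k
    unfolding Sact_def F_def r'
    by (simp add: rat_diff rat_if0 rat_shiftf rat_divide_polyf rat_mult rat_polyf Lr[unfolded r'])
  have sol: "(\<Sum>i\<le>r. PS (l i) (z + of_int 0) * b (0 + int i)) = 0"
    using b unfolding SolA_def by blast
  hence sol': "(\<Sum>k<r. PS (l k) z * b (int k)) = - (PS (l r) z * b (int r))"
    by (simp add: lessThan_Suc_atMost[symmetric] r' eq_neg_iff_add_eq_0)
  have "act_at r (Sact l r h) z b =
      (\<Sum>k<r. (if k = 0 then 0 else F (k - 1)) * b (int k)) - (\<Sum>k<r. F r' / PS (l r) z * (PS (l k) z * b (int k)))"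
    unfolding act_at_def rs sum_subtractf[symmetric] by (intro sum.cong refl) (simp add: left_diff_distrib)
  also have "(\<Sum>k<r. F r' / PS (l r) z * (PS (l k) z * b (int k))) = - F r' * b (int r)"
    unfolding sum_distrib_left[symmetric] sol' using PSr by simp
  also have "(\<Sum>k<r. (if k = 0 then 0 else F (k - 1)) * b (int k)) = (\<Sum>k<r'. F k * b (int k + 1))"
    unfolding r' sum.lessThan_Suc_shift by (simp add: add.commute)
  finally have "act_at r (Sact l r h) z b = (\<Sum>k<r'. F k * b (int k + 1)) + F r' * b (int r' + 1)"
    by (simp add: r' add.commute)
  also have "\<dots> = act_at r h (z + 1) (\<lambda>n. b (n + 1))"
    unfolding act_at_def F_def r' by simp
  finally show ?thesis .
qed

lemma integral_shift:
  fixes l :: "nat \<Rightarrow> 'c::field poly"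
  assumes Lr: "l r \<noteq> 0" and r: "0 < r" and int: "integral_at l r z (Sact l r h)"
  shows "integral_at l r (z + 1) h"
  unfolding integral_at_def valA_def
proof (rule INF_greatest)
  fix b' assume b': "b' \<in> SolA l r (z + 1) - {\<lambda>_. 0}"
  define b where "b n = b' (n - 1)" for n
  have bS: "b \<in> SolA l r z"
    unfolding SolA_def
  proof (intro CollectI allI)
    fix n :: int
    have "(\<Sum>i\<le>r. PS (l i) (z + 1 + of_int (n - 1)) * b' (n - 1 + int i)) = 0"
      using b' unfolding SolA_def by blast
    moreover have "z + 1 + of_int (n - 1) = z + of_int n" by simp
    moreover have "b (n + int i) = b' (n - 1 + int i)" for i
      unfolding b_def by (rule arg_cong[of _ _ b']) simp
    ultimately show "(\<Sum>i\<le>r. PS (l i) (z + of_int n) * b (n + int i)) = 0"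
      by simp
  qed
  have bb: "(\<lambda>n. b (n + 1)) = b'" by (simp add: b_def)
  have b0: "b \<noteq> (\<lambda>_. 0)"
  proof
    assume h: "b = (\<lambda>_. 0)"
    have "b' = (\<lambda>n. b (n + 1))" using bb by simp
    also have "\<dots> = (\<lambda>_. 0)" using h by simp
    finally show False using b' by simp
  qed
  have "0 \<le> nu_q (act_at r (Sact l r h) z b) - liminf (\<lambda>n::nat. nu_q (b (- int n)))"
  proof -
    have "valA l r z (Sact l r h) \<le> nu_q (act_at r (Sact l r h) z b) - liminf (\<lambda>n::nat. nu_q (b (- int n)))"
      unfolding valA_def by (rule INF_lower) (use bS b0 in simp)
    thus ?thesis using int unfolding integral_at_def by simp
  qed
  also have "act_at r (Sact l r h) z b = act_at r h (z + 1) b'"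
    using act_Sact[OF Lr r bS] bb by simp
  also have "liminf (\<lambda>n::nat. nu_q (b (- int n))) = liminf ((\<lambda>n::nat. nu_q (b' (- int n))) \<circ> Suc)"
    by (rule arg_cong[of _ _ liminf], rule ext, simp add: b_def, rule arg_cong[where f="\<lambda>x. nu_q (b' x)"], simp)
  also have "nu_q (act_at r h (z + 1) b') - liminf ((\<lambda>n::nat. nu_q (b' (- int n))) \<circ> Suc)
      \<le> nu_q (act_at r h (z + 1) b') - liminf (\<lambda>n::nat. nu_q (b' (- int n)))"
    by (intro ereal_minus_mono order_refl liminf_subseq_mono) (simp add: strict_mono_Suc_iff)
  finally show "0 \<le> nu_q (act_at r h (z + 1) b') - liminf (\<lambda>n::nat. nu_q (b' (- int n)))" .
qed


lemma std_integral:
  fixes l :: "nat \<Rightarrow> 'c::field poly"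
  assumes Lr: "\<forall>n::int. n < 0 \<longrightarrow> poly (ac (l r)) (z + of_int n) \<noteq> 0"
    and f: "\<forall>k<r. f k \<in> loc_ring z"
  shows "integral_at l r z f"
  unfolding integral_at_def valA_def
proof (rule INF_greatest)
  fix b assume b: "b \<in> SolA l r z - {\<lambda>_. 0}"
  define Xs where "Xs n = nu_q (b (- int n))" for n :: nat
  have step: "(INF n\<in>{N..}. Xs n) \<le> nu_q (b t)" if tr0: "t < int r" for N t
  proof -
    define m where "m = (INF n\<in>{N..}. Xs n)"
    have "t < int r \<longrightarrow> m \<le> nu_q (b t)"
    proof (induction t rule: measure_induct_rule[where f="\<lambda>t. nat (t + int N)"])
      case (less t)
      show ?case
      proof (cases "t \<le> - int N")
        case True
        define n where "n = nat (- t)"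
        have nN: "N \<le> n" "t = - int n" using True by (auto simp: n_def)
        hence "m \<le> Xs n" unfolding m_def by (intro INF_lower) auto
        thus ?thesis using nN by (simp add: Xs_def)
      next
        case False
        show ?thesis
        proof
          assume tr: "t < int r"
          define t0 where "t0 = t - int r"
          have t0: "t0 < 0" using tr by (simp add: t0_def)
          have sol: "(\<Sum>i\<le>r. PS (l i) (z + of_int t0) * b (t0 + int i)) = 0"
            using b unfolding SolA_def by blast
          hence eq: "PS (l r) (z + of_int t0) * b t = - (\<Sum>i<r. PS (l i) (z + of_int t0) * b (t0 + int i))"
            by (simp add: lessThan_Suc_atMost[symmetric] t0_def eq_neg_iff_add_eq_0 add.commute)
          have "m \<le> nu_q (- (\<Sum>i<r. PS (l i) (z + of_int t0) * b (t0 + int i)))"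
            unfolding nu_minus
          proof (rule nu_sum)
            fix i assume "i \<in> {..<r}"
            hence i: "i < r" by simp
            have "nat (t0 + int i + int N) < nat (t + int N)" using False i by (simp add: t0_def)
            moreover have "t0 + int i < int r" using i tr by (simp add: t0_def)
            ultimately have "m \<le> nu_q (b (t0 + int i))" using less by blast
            thus "m \<le> nu_q (PS (l i) (z + of_int t0) * b (t0 + int i))"
              unfolding nu_mult using nu_PS_ge[of "l i" "z + of_int t0"] by (simp add: add_increasing)
          qed
          also have "\<dots> = nu_q (b t)"
            unfolding eq[symmetric] nu_mult using nu_PS_0[of "l r" "z + of_int t0"] Lr t0 by simp
          finally show "m \<le> nu_q (b t)" .
        qed
      qed
    qed
    thus ?thesis using tr0 by (simp add: m_def)
  qed
  have lim: "liminf Xs \<le> nu_q (b t)" if "t < int r" for t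
    unfolding liminf_SUP_INF by (rule SUP_least) (use step that in auto)
  have "liminf Xs \<le> nu_q (act_at r f z b)"
    unfolding act_at_def
  proof (rule nu_sum)
    fix k assume "k \<in> {..<r}"
    hence k: "k < r" by simp
    have "0 \<le> nu_q (rat_at_shift (f k) z)" using f k by (intro nu_rat_loc) auto
    moreover have "liminf Xs \<le> nu_q (b (int k))" using k by (intro lim) simp
    ultimately show "liminf Xs \<le> nu_q (rat_at_shift (f k) z * b (int k))"
      unfolding nu_mult by (simp add: add_increasing)
  qed
  thus "0 \<le> nu_q (act_at r f z b) - liminf (\<lambda>n::nat. nu_q (b (- int n)))"
    unfolding Xs_def[symmetric] by (rule ereal_diff_positive)
qed

section \<open>orbits\<close>

lemma same_orbit_iff: "same_orbit z b \<longleftrightarrow> (\<exists>k::int. z = b + of_int k)"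
  unfolding same_orbit_def by (auto simp: algebra_simps)

lemma same_orbit_refl: "same_orbit (z::'a::ring_1) z"
  unfolding same_orbit_def by (intro exI[of _ 0]) simp

lemma same_orbit_sym: "same_orbit (z::'a::ring_1) w \<Longrightarrow> same_orbit w z"
  unfolding same_orbit_def by (metis minus_diff_eq of_int_minus)

lemma same_orbit_trans: "same_orbit (z::'a::ring_1) w \<Longrightarrow> same_orbit w v \<Longrightarrow> same_orbit z v"
  unfolding same_orbit_def by (metis diff_add_cancel of_int_add add.commute add_diff_eq)

lemma same_orbit_shift: "same_orbit ((z::'a::ring_1) + of_int k) w \<longleftrightarrow> same_orbit z w"
  unfolding same_orbit_def
proof
  assume "\<exists>n. z + of_int k - w = of_int n"
  then obtain n where "z + of_int k - w = of_int n" by blast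
  hence "z - w = of_int (n - k)" by (simp add: algebra_simps)
  thus "\<exists>n. z - w = of_int n" by blast
next
  assume "\<exists>n. z - w = of_int n"
  then obtain n where "z - w = of_int n" by blast
  hence "z + of_int k - w = of_int (n + k)" by (simp add: algebra_simps)
  thus "\<exists>n. z + of_int k - w = of_int n" by blast
qed

lemma orb_lt_int: "orb_lt ((b::'a::ring_char_0) + of_int m) (b + of_int n) \<longleftrightarrow> m < n"
proof
  assume "orb_lt (b + of_int m) (b + of_int n)"
  then obtain k :: nat where k: "k > 0" "b + of_int m - (b + of_int n) = - of_nat k"
    unfolding orb_lt_def by blast
  hence "(of_int (m - n) :: 'a) = of_int (- int k)" by simp
  hence "m - n = - int k" using of_int_eq_iff by blast
  thus "m < n" using k by simp
next
  assume "m < n"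
  thus "orb_lt (b + of_int m) (b + of_int n)" unfolding orb_lt_def
    by (intro exI[of _ "nat (n - m)"]) (simp add: of_nat_nat)
qed

lemma orb_le_int: "orb_le ((b::'a::ring_char_0) + of_int m) (b + of_int n) \<longleftrightarrow> m \<le> n"
  unfolding orb_le_def orb_lt_int by auto

lemma orb_int_form:
  assumes "same_orbit z (b::'a::ring_1)" obtains k where "z = b + of_int k"
  using assms same_orbit_iff by blast

definition is_omax where
  "is_omax R b \<rho> \<longleftrightarrow> \<rho> \<in> R \<and> same_orbit \<rho> b \<and> (\<forall>\<rho>'\<in>R. same_orbit \<rho>' b \<longrightarrow> orb_le \<rho>' \<rho>)"
definition is_omin where
  "is_omin R b \<rho> \<longleftrightarrow> \<rho> \<in> R \<and> same_orbit \<rho> b \<and> (\<forall>\<rho>'\<in>R. same_orbit \<rho>' b \<longrightarrow> orb_le \<rho> \<rho>')"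

lemma orb_le_antisym: "orb_le (z::'a::ring_char_0) w \<Longrightarrow> orb_le w z \<Longrightarrow> same_orbit z w \<Longrightarrow> z = w"
proof -
  assume a: "orb_le z w" "orb_le w z" "same_orbit z w"
  obtain k where k: "z = w + of_int k" using a(3) by (rule orb_int_form)
  have "orb_le (w + of_int k) (w + of_int 0)" "orb_le (w + of_int 0) (w + of_int k)" using a k by simp_all
  hence "k = 0" unfolding orb_le_int by simp
  thus ?thesis using k by simp
qed

lemma omax_exists:
  fixes R :: "'a::ring_char_0 set"
  assumes "finite R" "\<exists>\<rho>\<in>R. same_orbit \<rho> b"
  shows "\<exists>\<rho>. is_omax R b \<rho> \<and> is_omin R b (orbit_min R b) \<and> is_omax R b (orbit_max R b)"
proof -
  define K where "K = {n::int. b + of_int n \<in> R}"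
  have inj: "inj (\<lambda>n::int. b + of_int n)" by (auto simp: inj_def)
  have "finite K" unfolding K_def using assms(1)
    by (rule finite_vimageI[of R "\<lambda>n::int. b + of_int n", unfolded vimage_def]) (use inj in auto)
  moreover have "K \<noteq> {}" using assms(2) by (auto simp: K_def same_orbit_iff)
  ultimately have mx: "Max K \<in> K" "\<And>n. n \<in> K \<Longrightarrow> n \<le> Max K"
     and mn: "Min K \<in> K" "\<And>n. n \<in> K \<Longrightarrow> Min K \<le> n" by auto
  have omax: "is_omax R b (b + of_int (Max K))"
    unfolding is_omax_def
  proof (intro conjI ballI impI)
    show "b + of_int (Max K) \<in> R" using mx(1) by (simp add: K_def)
    show "same_orbit (b + of_int (Max K)) b" by (simp add: same_orbit_iff)
    fix \<rho>' assume "\<rho>' \<in> R" "same_orbit \<rho>' b"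
    then obtain k where "\<rho>' = b + of_int k" "k \<in> K" by (auto simp: same_orbit_iff K_def)
    thus "orb_le \<rho>' (b + of_int (Max K))" using mx(2) by (simp add: orb_le_int)
  qed
  have omin: "is_omin R b (b + of_int (Min K))"
    unfolding is_omin_def
  proof (intro conjI ballI impI)
    show "b + of_int (Min K) \<in> R" using mn(1) by (simp add: K_def)
    show "same_orbit (b + of_int (Min K)) b" by (simp add: same_orbit_iff)
    fix \<rho>' assume "\<rho>' \<in> R" "same_orbit \<rho>' b"
    then obtain k where "\<rho>' = b + of_int k" "k \<in> K" by (auto simp: same_orbit_iff K_def)
    thus "orb_le (b + of_int (Min K)) \<rho>'" using mn(2) by (simp add: orb_le_int)
  qed
  have "orbit_max R b = b + of_int (Max K)"
    unfolding orbit_max_def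
  proof (rule the_equality)
    show "b + of_int (Max K) \<in> R \<and> same_orbit (b + of_int (Max K)) b \<and>
      (\<forall>\<rho>'\<in>R. same_orbit \<rho>' b \<longrightarrow> orb_le \<rho>' (b + of_int (Max K)))" using omax by (simp add: is_omax_def)
    fix \<rho> assume h: "\<rho> \<in> R \<and> same_orbit \<rho> b \<and> (\<forall>\<rho>'\<in>R. same_orbit \<rho>' b \<longrightarrow> orb_le \<rho>' \<rho>)"
    have "orb_le \<rho> (b + of_int (Max K))" using h omax by (simp add: is_omax_def)
    moreover have "orb_le (b + of_int (Max K)) \<rho>" using h omax by (simp add: is_omax_def)
    moreover have "same_orbit \<rho> (b + of_int (Max K))"
      using h by (meson same_orbit_sym same_orbit_trans same_orbit_shift same_orbit_refl)
    ultimately show "\<rho> = b + of_int (Max K)" by (rule orb_le_antisym)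
  qed
  moreover have "orbit_min R b = b + of_int (Min K)"
    unfolding orbit_min_def
  proof (rule the_equality)
    show "b + of_int (Min K) \<in> R \<and> same_orbit (b + of_int (Min K)) b \<and>
      (\<forall>\<rho>'\<in>R. same_orbit \<rho>' b \<longrightarrow> orb_le (b + of_int (Min K)) \<rho>')" using omin by (simp add: is_omin_def)
    fix \<rho> assume h: "\<rho> \<in> R \<and> same_orbit \<rho> b \<and> (\<forall>\<rho>'\<in>R. same_orbit \<rho>' b \<longrightarrow> orb_le \<rho> \<rho>')"
    have "orb_le \<rho> (b + of_int (Min K))" using h omin by (simp add: is_omin_def)
    moreover have "orb_le (b + of_int (Min K)) \<rho>" using h omin by (simp add: is_omin_def)
    moreover have "same_orbit \<rho> (b + of_int (Min K))"
      using h by (meson same_orbit_sym same_orbit_trans same_orbit_shift same_orbit_refl)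
    ultimately show "\<rho> = b + of_int (Min K)" by (rule orb_le_antisym)
  qed
  ultimately show ?thesis using omax omin by auto
qed

lemma omax_unique:
  fixes R :: "'a::ring_char_0 set"
  assumes "finite R" "is_omax R b \<rho>" shows "orbit_max R b = \<rho>"
proof -
  have "\<exists>\<rho>\<in>R. same_orbit \<rho> b" using assms(2) by (auto simp: is_omax_def)
  then obtain \<rho>' where "is_omax R b (orbit_max R b)" using omax_exists[OF assms(1)] by blast
  hence "orb_le \<rho> (orbit_max R b)" "orb_le (orbit_max R b) \<rho>" "same_orbit \<rho> (orbit_max R b)"
    using assms(2) by (auto simp: is_omax_def intro: same_orbit_trans same_orbit_sym)
  thus ?thesis using orb_le_antisym by metis
qed

section \<open>minimal polynomials\<close>

lemma min_poly_nz: "is_min_poly z p \<Longrightarrow> p \<noteq> 0"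
  by (auto simp: is_min_poly_def)

lemma min_poly_dvd:
  fixes p :: "'c::{field_char_0,field_gcd} poly"
  assumes "is_min_poly z p" "poly (ac P) z = 0" shows "p dvd P"
proof -
  have p0: "p \<noteq> 0" using assms(1) by (rule min_poly_nz)
  have "P = p * (P div p) + P mod p" by simp
  hence "poly (ac (P mod p)) z = 0"
    using assms by (metis (no_types) ac_add ac_mult add_0 mult_zero_left is_min_poly_def poly_add poly_mult)
  show ?thesis
  proof (rule ccontr)
    assume "\<not> p dvd P"
    hence m0: "P mod p \<noteq> 0" by (simp add: dvd_eq_mod_eq_0)
    hence "degree (P mod p) < degree p" by (rule degree_mod_less'[OF p0])
    moreover have "degree p \<le> degree (P mod p)"
      using assms(1) m0 \<open>poly (ac (P mod p)) z = 0\<close> unfolding is_min_poly_def by blast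
    ultimately show False by simp
  qed
qed

lemma min_poly_root:
  fixes p :: "'c::{field_char_0,field_gcd} poly"
  assumes "is_min_poly z p" "poly (ac P) z = 0" "poly (ac p) w = 0" shows "poly (ac P) w = 0"
proof -
  obtain s where "P = p * s" using min_poly_dvd[OF assms(1,2)] by (auto simp: dvd_def)
  thus ?thesis using assms(3) by (simp add: ac_mult)
qed

lemma min_poly_conj:
  fixes p :: "'c::{field_char_0,field_gcd} poly"
  assumes mp: "is_min_poly z p" and w: "poly (ac p) w = 0" shows "is_min_poly w p"
  unfolding is_min_poly_def
proof (intro conjI allI impI)
  show "lead_coeff p = 1" "poly (ac p) w = 0" using mp w by (auto simp: is_min_poly_def)
  fix Q assume Q: "Q \<noteq> 0 \<and> poly (ac Q) w = 0"
  have p0: "p \<noteq> 0" using mp by (rule min_poly_nz)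
  define g where "g = gcd p Q"
  have "fst (bezout_coefficients p Q) * p + snd (bezout_coefficients p Q) * Q = g"
    unfolding g_def by (rule bezout_coefficients_fst_snd)
  hence gw: "poly (ac g) w = 0" using w Q by (metis ac_add ac_mult add_0 mult_zero_right poly_add poly_mult)
  obtain h where h: "p = g * h" unfolding g_def by (meson dvd_def gcd_dvd1)
  have g0: "g \<noteq> 0" and h0: "h \<noteq> 0" using h p0 by auto
  have "poly (ac g) z * poly (ac h) z = 0" using mp h by (simp add: is_min_poly_def ac_mult)
  hence "poly (ac g) z = 0 \<or> poly (ac h) z = 0" by simp
  hence "poly (ac g) z = 0"
  proof
    assume "poly (ac g) z = 0" thus ?thesis .
  next
    assume hz: "poly (ac h) z = 0"
    hence "degree p \<le> degree h" using mp h0 unfolding is_min_poly_def by blast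
    hence "degree g = 0" using h g0 h0 by (simp add: degree_mult_eq)
    then obtain c where "g = [:c:]" by (meson degree_eq_zeroE)
    hence False using gw g0 by (simp add: ac_const)
    thus ?thesis ..
  qed
  hence "degree p \<le> degree g" using mp g0 unfolding is_min_poly_def by blast
  also have "degree g \<le> degree Q" using Q unfolding g_def by (intro dvd_imp_degree_le) auto
  finally show "degree p \<le> degree Q" .
qed

lemma min_poly_shift:
  fixes p :: "'c::{field_char_0,field_gcd} poly"
  assumes mp: "is_min_poly z p" shows "is_min_poly (z - of_int t) (shiftp t p)"
  unfolding is_min_poly_def
proof (intro conjI allI impI)
  show "lead_coeff (shiftp t p) = 1" using mp
    by (simp add: is_min_poly_def shiftp_def lead_coeff_comp)
  show "poly (ac (shiftp t p)) (z - of_int t) = 0" using mp by (simp add: poly_ac_shiftp is_min_poly_def)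
  fix Q assume Q: "Q \<noteq> 0 \<and> poly (ac Q) (z - of_int t) = 0"
  have "poly (ac (shiftp (-t) Q)) z = 0" using Q by (simp add: poly_ac_shiftp)
  moreover have "shiftp (-t) Q \<noteq> 0" using Q by (simp add: shiftp_eq_0_iff)
  ultimately have "degree p \<le> degree (shiftp (-t) Q)" using mp unfolding is_min_poly_def by blast
  thus "degree (shiftp t p) \<le> degree Q" by (simp add: degree_shiftp)
qed

locale mainctx = redsetup l r W e et M Mt
  for l :: "nat \<Rightarrow> 'c::{field_char_0,field_gcd} poly" and r W e et M Mt +
  fixes I :: nat and \<beta> :: "nat \<Rightarrow> 'c alg_closure" and p :: "nat \<Rightarrow> 'c poly"
  assumes betas: "admissible_betas l r I \<beta>"
    and suit: "suitable_basis l r I \<beta> W"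
    and minp: "\<forall>i<I. is_min_poly (\<beta> i) (p i)"
begin

abbreviation "RS \<equiv> rootsL l r"

lemma RS_finite: "finite RS"
proof -
  have "ac (l 0 * l r) \<noteq> 0" using L0 Lr by (simp add: ac_eq_0_iff)
  thus ?thesis unfolding rootsL_def by (rule poly_roots_finite)
qed

lemma adm1: "i < I \<Longrightarrow> \<exists>\<rho>\<in>RS. same_orbit \<rho> (\<beta> i)"
  using betas unfolding admissible_betas_def Let_def by blast
lemma adm2: "\<rho> \<in> RS \<Longrightarrow> \<exists>i<I. same_orbit \<rho> (\<beta> i)"
  using betas unfolding admissible_betas_def Let_def by blast
lemma adm3: "i < I \<Longrightarrow> j < I \<Longrightarrow> same_orbit (\<beta> i) (\<beta> j) \<Longrightarrow> i = j"
  using betas unfolding admissible_betas_def Let_def by blast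
lemma adm4: "i < I \<Longrightarrow> orb_le (orbit_max RS (\<beta> i)) (\<beta> i)"
  using betas unfolding admissible_betas_def Let_def by blast
lemma adm5: "i < I \<Longrightarrow> i' < I \<Longrightarrow> C_conjugate (orbit_max RS (\<beta> i)) (orbit_max RS (\<beta> i')) \<Longrightarrow>
            \<beta> i - orbit_max RS (\<beta> i) = \<beta> i' - orbit_max RS (\<beta> i')"
  using betas unfolding admissible_betas_def Let_def by blast

lemma suitZ: "z \<in> Zset l r I \<beta> \<Longrightarrow> local_integral_basis l r z W"
  using suit unfolding suitable_basis_def by blast
lemma suitN: "z \<notin> Zset l r I \<beta> \<Longrightarrow> same_module_as_std r z W"
  using suit unfolding suitable_basis_def by blast

lemma RS_iff: "z \<in> RS \<longleftrightarrow> poly (ac (l 0)) z = 0 \<or> poly (ac (l r)) z = 0"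
  by (simp add: rootsL_def ac_mult)

lemma Z_orbit: "z \<in> Zset l r I \<beta> \<Longrightarrow> \<exists>i<I. same_orbit z (\<beta> i)"
  unfolding Zset_def by blast

lemma orbit_facts:
  assumes i: "i < I"
  shows "\<exists>u v. v \<le> u \<and> u \<le> 0 \<and> (\<forall>n. \<beta> i + of_int n \<in> RS \<longrightarrow> v \<le> n \<and> n \<le> u)
     \<and> \<beta> i + of_int v \<in> RS \<and> \<beta> i + of_int u \<in> RS \<and> orbit_max RS (\<beta> i) = \<beta> i + of_int u
     \<and> (\<forall>n. \<beta> i + of_int n \<in> Zset l r I \<beta> \<longleftrightarrow> v < n \<and> n \<le> 0)"
proof -
  define b where "b = \<beta> i"
  have ex: "is_omin RS b (orbit_min RS b)" "is_omax RS b (orbit_max RS b)"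
    using omax_exists[OF RS_finite adm1[OF i]] unfolding b_def by blast+
  obtain u where u: "orbit_max RS b = b + of_int u"
    using ex(2) unfolding is_omax_def by (meson orb_int_form)
  obtain v where v: "orbit_min RS b = b + of_int v"
    using ex(1) unfolding is_omin_def by (meson orb_int_form)
  have rng: "v \<le> n \<and> n \<le> u" if "b + of_int n \<in> RS" for n
  proof -
    have so: "same_orbit (b + of_int n) b" by (simp add: same_orbit_iff)
    have "orb_le (b + of_int v) (b + of_int n)" using ex(1) that so v unfolding is_omin_def by auto
    moreover have "orb_le (b + of_int n) (b + of_int u)" using ex(2) that so u unfolding is_omax_def by auto
    ultimately show ?thesis by (simp add: orb_le_int)
  qed
  have vR: "b + of_int v \<in> RS" and uR: "b + of_int u \<in> RS"
    using ex u v unfolding is_omin_def is_omax_def by auto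
  have vu: "v \<le> u" using rng[OF uR] by simp
  have u0: "u \<le> 0" using adm4[OF i] u unfolding b_def[symmetric]
    using orb_le_int[of b u 0] by simp
  have Z: "b + of_int n \<in> Zset l r I \<beta> \<longleftrightarrow> v < n \<and> n \<le> 0" for n
  proof
    assume "b + of_int n \<in> Zset l r I \<beta>"
    then obtain i'' where i'': "i'' < I" "same_orbit (b + of_int n) (\<beta> i'')"
      "orb_lt (orbit_min RS (\<beta> i'')) (b + of_int n)" "orb_le (b + of_int n) (\<beta> i'')"
      unfolding Zset_def by blast
    have "same_orbit (\<beta> i) (\<beta> i'')" using i''(2) unfolding b_def
      by (meson same_orbit_shift)
    hence "i'' = i" using adm3[OF i i''(1)] by simp
    thus "v < n \<and> n \<le> 0" using i'' v orb_lt_int[of b v n] orb_le_int[of b n 0] by (simp add: b_def)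
  next
    assume "v < n \<and> n \<le> 0"
    hence "same_orbit (b + of_int n) (\<beta> i) \<and> orb_lt (orbit_min RS (\<beta> i)) (b + of_int n)
        \<and> orb_le (b + of_int n) (\<beta> i)"
      using v orb_lt_int[of b v n] orb_le_int[of b n 0] by (simp add: same_orbit_iff b_def)
    thus "b + of_int n \<in> Zset l r I \<beta>" unfolding Zset_def using i by blast
  qed
  show ?thesis unfolding b_def[symmetric] using vu u0 rng vR uR u Z by blast
qed


lemma RS_shift: "poly (ac (shiftp n (l 0 * l r))) z = 0 \<longleftrightarrow> z + of_int n \<in> RS"
  by (simp add: poly_ac_shiftp rootsL_def)

lemma conj_beta:
  assumes i0: "i0 < I" and g: "poly (ac (p i0)) \<gamma> = 0"
  shows "\<exists>i'<I. \<beta> i' = \<gamma>"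
proof -
  obtain u v where uv: "v \<le> u" "u \<le> 0" "\<forall>n. \<beta> i0 + of_int n \<in> RS \<longrightarrow> v \<le> n \<and> n \<le> u"
     "\<beta> i0 + of_int u \<in> RS" "orbit_max RS (\<beta> i0) = \<beta> i0 + of_int u"
    using orbit_facts[OF i0] by blast
  have mp: "is_min_poly (\<beta> i0) (p i0)" using minp i0 by blast
  have mpg: "is_min_poly \<gamma> (p i0)" using min_poly_conj[OF mp g] .
  have gR: "\<gamma> + of_int u \<in> RS"
    using min_poly_root[OF mp _ g, of "shiftp u (l 0 * l r)"] uv(4) by (simp add: RS_shift)
  have omax: "is_omax RS \<gamma> (\<gamma> + of_int u)"
    unfolding is_omax_def
  proof (intro conjI ballI impI)
    show "\<gamma> + of_int u \<in> RS" by (fact gR)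
    show "same_orbit (\<gamma> + of_int u) \<gamma>" by (simp add: same_orbit_iff)
    fix \<rho>' assume "\<rho>' \<in> RS" "same_orbit \<rho>' \<gamma>"
    then obtain n where n: "\<rho>' = \<gamma> + of_int n" "\<gamma> + of_int n \<in> RS" by (metis orb_int_form)
    have "\<beta> i0 + of_int n \<in> RS"
      using min_poly_root[OF mpg _ mp[unfolded is_min_poly_def, THEN conjunct2, THEN conjunct1],
          of "shiftp n (l 0 * l r)"] n(2) by (simp add: RS_shift)
    hence "n \<le> u" using uv(3) by blast
    thus "orb_le \<rho>' (\<gamma> + of_int u)" using n(1) by (simp add: orb_le_int)
  qed
  obtain i' where i': "i' < I" "same_orbit (\<gamma> + of_int u) (\<beta> i')" using adm2[OF gR] by blast
  have so: "same_orbit x (\<beta> i') \<longleftrightarrow> same_orbit x \<gamma>" for x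
    using i'(2) by (meson same_orbit_shift same_orbit_sym same_orbit_trans)
  have "is_omax RS (\<beta> i') (\<gamma> + of_int u)" using omax unfolding is_omax_def so .
  hence om': "orbit_max RS (\<beta> i') = \<gamma> + of_int u" by (rule omax_unique[OF RS_finite])
  have "C_conjugate (orbit_max RS (\<beta> i0)) (orbit_max RS (\<beta> i'))"
    unfolding C_conjugate_def uv(5) om'
    using min_poly_shift[OF mp, of "-u"] min_poly_shift[OF mpg, of "-u"] by auto
  hence "\<beta> i0 - orbit_max RS (\<beta> i0) = \<beta> i' - orbit_max RS (\<beta> i')" by (rule adm5[OF i0 i'(1)])
  hence "\<beta> i' = \<gamma>" unfolding uv(5) om' by (simp add: algebra_simps)
  thus ?thesis using i'(1) by blast
qed

lemma regD_ii:
  assumes i: "i < I" and j: "1 \<le> j"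
  shows "\<forall>a<r. \<forall>b<r. Nf a b \<in> loc_ring (\<beta> i + of_int (- int j))"
proof -
  obtain u v where uv: "v \<le> u" "u \<le> 0" "\<forall>n. \<beta> i + of_int n \<in> RS \<longrightarrow> v \<le> n \<and> n \<le> u"
     "\<beta> i + of_int v \<in> RS" "\<forall>n. \<beta> i + of_int n \<in> Zset l r I \<beta> \<longleftrightarrow> v < n \<and> n \<le> 0"
    using orbit_facts[OF i] by blast
  define n where "n = - int j"
  have n1: "n \<le> -1" using j by (simp add: n_def)
  define z where "z = \<beta> i + of_int n"
  have z1: "z + 1 = \<beta> i + of_int (n + 1)" by (simp add: z_def)
  have cong: "\<And>f g. eqA r f g \<Longrightarrow> integral_at l r z f \<Longrightarrow> integral_at l r z g" by (rule integral_cong)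
  have shi: "\<And>h. integral_at l r z (Sact l r h) \<Longrightarrow> integral_at l r (z + 1) h"
    using Lr rpos by (rule integral_shift)
  have "n + 1 \<le> v \<or> n = v \<or> v < n" by linarith
  then consider "n + 1 \<le> v" | "n = v" | "v < n" by blast
  hence "\<forall>a<r. \<forall>b<r. Nf a b \<in> loc_ring z"
  proof cases
    case 1
    have "z \<notin> Zset l r I \<beta>" using uv(5)[rule_format, of n] 1 unfolding z_def by simp
    moreover have "z + 1 \<notin> Zset l r I \<beta>" using uv(5)[rule_format, of "n + 1"] 1 unfolding z1 by simp
    moreover have "z \<notin> RS" using uv(3)[rule_format, of n] 1 unfolding z_def by auto
    ultimately show ?thesis using suitN RS_iff by (intro N_reg_std) auto
  next
    case 2
    have zN: "z \<notin> Zset l r I \<beta>" using uv(5)[rule_format, of n] 2 unfolding z_def by simp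
    have z1Z: "z + 1 \<in> Zset l r I \<beta>" using uv(5)[rule_format, of "n + 1"] 2 n1 unfolding z1 by simp
    have "\<forall>jj<r. integral_at l r z (W jj)"
    proof (intro allI impI)
      fix jj assume jj: "jj < r"
      show "integral_at l r z (W jj)"
      proof (rule std_integral)
        show "\<forall>k<r. W jj k \<in> loc_ring z" using std_coords[OF suitN[OF zN] jj] by blast
        show "\<forall>n'::int. n' < 0 \<longrightarrow> poly (ac (l r)) (z + of_int n') \<noteq> 0"
        proof (intro allI impI)
          fix n' :: int assume "n' < 0"
          hence "\<beta> i + of_int (n + n') \<notin> RS" using uv(3)[rule_format, of "n + n'"] 2 by auto
          thus "poly (ac (l r)) (z + of_int n') \<noteq> 0" unfolding z_def RS_iff by (simp add: add.assoc)
        qed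
      qed
    qed
    thus ?thesis using suitZ[OF z1Z] shi cong by (rule N_reg_int)
  next
    case 3
    have zZ: "z \<in> Zset l r I \<beta>" using uv(5)[rule_format, of n] 3 n1 unfolding z_def by simp
    have z1Z: "z + 1 \<in> Zset l r I \<beta>" using uv(5)[rule_format, of "n + 1"] 3 n1 unfolding z1 by simp
    have "\<forall>jj<r. integral_at l r z (W jj)" using suitZ[OF zZ] unfolding local_integral_basis_def by blast
    thus ?thesis using suitZ[OF z1Z] shi cong by (rule N_reg_int)
  qed
  thus ?thesis by (simp add: z_def n_def)
qed

lemma regU_ii:
  assumes i: "i < I" and j: "1 \<le> j"
  shows "\<forall>a<r. \<forall>b<r. Mf a b \<in> loc_ring (\<beta> i + of_int (int j))"
proof -
  obtain u v where uv: "v \<le> u" "u \<le> 0" "\<forall>n. \<beta> i + of_int n \<in> RS \<longrightarrow> v \<le> n \<and> n \<le> u"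
     "\<forall>n. \<beta> i + of_int n \<in> Zset l r I \<beta> \<longleftrightarrow> v < n \<and> n \<le> 0"
    using orbit_facts[OF i] by blast
  define n where "n = int j"
  have n1: "1 \<le> n" using j by (simp add: n_def)
  define z where "z = \<beta> i + of_int n"
  have z1: "z + 1 = \<beta> i + of_int (n + 1)" by (simp add: z_def)
  have "z \<notin> Zset l r I \<beta>" using uv(4)[rule_format, of n] n1 unfolding z_def by simp
  moreover have "z + 1 \<notin> Zset l r I \<beta>" using uv(4)[rule_format, of "n + 1"] n1 unfolding z1 by simp
  moreover have "z \<notin> RS" using uv(3)[rule_format, of n] uv(2) n1 unfolding z_def by auto
  ultimately have "\<forall>a<r. \<forall>b<r. Mf a b \<in> loc_ring z" using suitN RS_iff by (intro M_reg_std) auto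
  thus ?thesis by (simp add: z_def n_def)
qed

lemma reg_i:
  assumes cop: "\<forall>i<I. \<forall>j::int. gcd q (shiftp j (p i)) = 1" and root: "poly (ac q) (z + of_int s) = 0"
  shows "(\<forall>a<r. \<forall>b<r. Nf a b \<in> loc_ring z) \<and> (\<forall>a<r. \<forall>b<r. Mf a b \<in> loc_ring z)"
proof -
  have no: "\<not> same_orbit z (\<beta> i)" if i: "i < I" for i
  proof
    assume "same_orbit z (\<beta> i)"
    then obtain k where k: "z - \<beta> i = of_int k" unfolding same_orbit_def by blast
    have "poly (ac (shiftp (- (k + s)) (p i))) (z + of_int s) = 0"
      using minp i k by (simp add: poly_ac_shiftp is_min_poly_def algebra_simps)
    hence "\<not> coprime q (shiftp (- (k + s)) (p i))" using root by (intro common_root_ac)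
    moreover have "coprime q (shiftp (- (k + s)) (p i))" using cop i by (simp add: coprime_iff_gcd_eq_1)
    ultimately show False by blast
  qed
  have no1: "\<not> same_orbit (z + 1) (\<beta> i)" if "i < I" for i
    using no[OF that] same_orbit_shift[of z 1 "\<beta> i"] by simp
  have zN: "z \<notin> Zset l r I \<beta>" "z + 1 \<notin> Zset l r I \<beta>" using Z_orbit no no1 by blast+
  have "z \<notin> RS" using adm2 no by blast
  hence "poly (ac (l 0)) z \<noteq> 0" "poly (ac (l r)) z \<noteq> 0" using RS_iff by auto
  thus ?thesis using zN suitN by (intro conjI N_reg_std M_reg_std) auto
qed

lemma RR_ell:
  assumes q0: "q \<noteq> 0"
    and cD: "\<And>j z. 1 \<le> j \<Longrightarrow> poly (ac (shiftp (int j) q)) z = 0 \<Longrightarrow> \<forall>i<r. \<forall>j'<r. Nf i j' \<in> loc_ring z"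
    and cU: "\<And>j z. 1 \<le> j \<Longrightarrow> poly (ac (shiftp (- int j) q)) z = 0 \<Longrightarrow> \<forall>i<r. \<forall>j'<r. Mf i j' \<in> loc_ring z"
  shows "\<exists>g c. eqA r (fracA r (shiftp ell q) a W) (addA (Delta l r g) (fracA r (q * e * et) c W))"
proof -
  have "RR (q * e * et) (shiftp ell q)"
  proof (cases "ell \<ge> 0")
    case True
    have "RR (q * e * et) (shiftp (int (nat ell)) q)"
      using q0 cD by (intro chain_down) auto
    thus ?thesis using True by simp
  next
    case False
    have "RR (q * e * et) (shiftp (- int (nat (- ell))) q)"
      using q0 cU False by (intro chain_up) auto
    thus ?thesis using False by simp
  qed
  thus ?thesis unfolding RR_def good_def fracA_comb by blast
qed

end

theorem mainTheorem7:
  fixes l :: "nat \<Rightarrow> 'c::{field_char_0,field_gcd} poly" and r I :: nat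
    and \<beta> :: "nat \<Rightarrow> 'c alg_closure" and W :: "nat \<Rightarrow> 'c elt"
    and e et :: "'c poly" and M Mt :: "nat \<Rightarrow> nat \<Rightarrow> 'c poly"
    and p :: "nat \<Rightarrow> 'c poly" and q :: "'c poly" and a :: "nat \<Rightarrow> 'c poly" and ell :: int
  assumes L0: "l 0 \<noteq> 0" and Lr: "l r \<noteq> 0"
    and betas: "admissible_betas l r I \<beta>"
    and suit: "suitable_basis l r I \<beta> W"
    and SW: "\<forall>i<r. eqA r (Sact l r (W i)) (comb r (\<lambda>j. polyf (M i j) / polyf e) W)"
    and inv1: "\<forall>i<r. \<forall>j<r. (\<Sum>k<r. (polyf (M i k) / polyf e) * (polyf (Mt k j) / polyf et))
                  = (if i = j then 1 else 0)"
    and inv2: "\<forall>i<r. \<forall>j<r. (\<Sum>k<r. (polyf (Mt i k) / polyf et) * (polyf (M k j) / polyf e))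
                  = (if i = j then 1 else 0)"
    and minp: "\<forall>i<I. is_min_poly (\<beta> i) (p i)"
  shows "((\<forall>i<I. \<forall>j::int. gcd q (shiftp j (p i)) = 1) \<longrightarrow>
            (\<exists>g c. eqA r (fracA r (shiftp ell q) a W) (addA (Delta l r g) (fracA r (q * e * et) c W))))
       \<and> ((\<exists>i<I. \<exists>m::nat. m > 0 \<and> q = p i ^ m) \<longrightarrow>
            (\<exists>g c. eqA r (fracA r (shiftp ell q) a W) (addA (Delta l r g) (fracA r (q * e * et) c W))))"
proof (cases "r = 0")
  case True
  thus ?thesis by (simp add: eqA_def)
next
  case rpos: False
  show ?thesis
  proof (cases "q = 0")
    case True
    have triv: "eqA r (fracA r (shiftp ell q) a W) (addA (Delta l r (\<lambda>_. 0)) (fracA r (q * e * et) (\<lambda>_. 0) W))"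
      using True by (simp add: eqA_def addA_def fracA_def Delta_zero polyf_0)
    show ?thesis using triv by blast
  next
    case q0: False
    interpret mainctx l r W e et M Mt I \<beta> p
      by unfold_locales (use L0 Lr betas suit SW inv1 inv2 minp rpos in \<open>auto simp: suitable_basis_def\<close>)
    have pw: "poly (ac (pp ^ m)) x = 0 \<Longrightarrow> poly (ac pp) x = 0" for pp :: "'c poly" and m x
      by (simp add: ac_power)
    show ?thesis
    proof (intro conjI impI)
      assume cop: "\<forall>i<I. \<forall>j::int. gcd q (shiftp j (p i)) = 1"
      show "\<exists>g c. eqA r (fracA r (shiftp ell q) a W) (addA (Delta l r g) (fracA r (q * e * et) c W))"
      proof (rule RR_ell[OF q0])
        fix j z assume "1 \<le> j" "poly (ac (shiftp (int j) q)) z = 0"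
        hence "poly (ac q) (z + of_int (int j)) = 0" by (simp add: poly_ac_shiftp)
        thus "\<forall>i<r. \<forall>j'<r. Nf i j' \<in> loc_ring z" using reg_i[OF cop] by blast
      next
        fix j z assume "1 \<le> j" "poly (ac (shiftp (- int j) q)) z = 0"
        hence "poly (ac q) (z + of_int (- int j)) = 0" by (simp add: poly_ac_shiftp)
        thus "\<forall>i<r. \<forall>j'<r. Mf i j' \<in> loc_ring z" using reg_i[OF cop] by blast
      qed
    next
      assume "\<exists>i<I. \<exists>m. 0 < m \<and> q = p i ^ m"
      then obtain i m where im: "i < I" "0 < m" "q = p i ^ m" by blast
      show "\<exists>g c. eqA r (fracA r (shiftp ell q) a W) (addA (Delta l r g) (fracA r (q * e * et) c W))"
      proof (rule RR_ell[OF q0])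
        fix j z assume j: "1 \<le> j" and "poly (ac (shiftp (int j) q)) z = 0"
        hence "poly (ac (p i)) (z + of_int (int j)) = 0" using im pw by (simp add: poly_ac_shiftp)
        then obtain i' where i': "i' < I" "\<beta> i' = z + of_int (int j)" using conj_beta[OF im(1)] by blast
        have "z = \<beta> i' + of_int (- int j)" using i'(2) by simp
        thus "\<forall>i<r. \<forall>j'<r. Nf i j' \<in> loc_ring z" using regD_ii[OF i'(1) j] by simp
      next
        fix j z assume j: "1 \<le> j" and "poly (ac (shiftp (- int j) q)) z = 0"
        hence "poly (ac (p i)) (z + of_int (- int j)) = 0" using im pw by (simp add: poly_ac_shiftp)
        then obtain i' where i': "i' < I" "\<beta> i' = z + of_int (- int j)" using conj_beta[OF im(1)] by blast
        have "z = \<beta> i' + of_int (int j)" using i'(2) by simp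
        thus "\<forall>i<r. \<forall>j'<r. Mf i j' \<in> loc_ring z" using regU_ii[OF i'(1) j] by simp
      qed
    qed
  qed
qed

end
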